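(* Let $n$ be a positive integer with $n \equiv 3 \pmod 6$ and \[n \notin \{9, 15, 21, 141, 153, 165, 177, 189, 231, 249, 261, 285, 351, 357\},\] and let $\rho$ be an integer with $1 \le \rho \le n/3$. Then there exists an $(n+\rho,4)$-packing with exactly $\rho n/3 + D(\rho,4)$ blocks in which the largest partial parallel class has size $\rho$.
   Context: For integers $v \ge k \ge 2$, a $(v,k)$-packing is a pair $(X,\mathcal{B})$ where $X$ is a set of $v$ points and $\mathcal{B}$ is a set of $k$-subsets of $X$ (blocks) such that every pair of distinct points lies in at most one block. For integers $m \ge 0$, $D(m,k)$ denotes the maximum number of $k$-subsets of an $m$-set such that every pair of points lies in at most one of them (so $D(m,k)=0$ if $m<k$). A partial parallel class (PPC) is a set of pairwise disjoint blocks; its size is the number of blocks in it. "The largest PPC has size $\rho$" means that the packing contains a PPC of size $\rho$ but no PPC of size $\rho+1$. *)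

theory Defs
  imports Main
begin

definition is_packing :: "nat \<Rightarrow> nat \<Rightarrow> 'a set \<Rightarrow> 'a set set \<Rightarrow> bool" where
  "is_packing v k X B \<longleftrightarrow>
     finite X \<and> card X = v \<and>
     (\<forall>b\<in>B. b \<subseteq> X \<and> card b = k) \<and>
     (\<forall>x\<in>X. \<forall>y\<in>X. x \<noteq> y \<longrightarrow> card {b\<in>B. x \<in> b \<and> y \<in> b} \<le> 1)"

definition D :: "nat \<Rightarrow> nat \<Rightarrow> nat" where
  "D m k = Max {card B | B. is_packing m k {0..<m::nat} B}"

definition is_PPC :: "'a set set \<Rightarrow> 'a set set \<Rightarrow> bool" where
  "is_PPC B P \<longleftrightarrow> P \<subseteq> B \<and> (\<forall>b\<in>P. \<forall>c\<in>P. b \<noteq> c \<longrightarrow> b \<inter> c = {})"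

definition largest_PPC_size :: "'a set set \<Rightarrow> nat \<Rightarrow> bool" where
  "largest_PPC_size B r \<longleftrightarrow>
     (\<exists>P. is_PPC B P \<and> finite P \<and> card P = r) \<and>
     \<not> (\<exists>P. is_PPC B P \<and> finite P \<and> card P = r + 1)"

end

theory Submission imports Defs "HOL-Library.Countable" begin

definition goodI :: "'p set \<Rightarrow> 'i set \<Rightarrow> ('i \<Rightarrow> 'p set set) \<Rightarrow> ('i \<Rightarrow> 'p set) \<Rightarrow> bool" where
 "goodI V I P s \<longleftrightarrow> finite V \<and> finite I \<and> card V = 3 * card I \<and>
   (\<forall>i\<in>I. \<forall>T\<in>P i. T \<subseteq> V \<and> card T = 3) \<and>
   (\<forall>i\<in>I. \<forall>T\<in>P i. \<forall>T'\<in>P i. T \<inter> T' \<noteq> {} \<longrightarrow> T = T') \<and>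
   (\<forall>i\<in>I. \<Union>(P i) = V) \<and>
   (\<forall>i\<in>I. \<forall>j\<in>I. \<forall>T\<in>P i. \<forall>T'\<in>P j. \<forall>x y. x \<noteq> y \<longrightarrow> x \<in> T \<longrightarrow> y \<in> T \<longrightarrow> x \<in> T' \<longrightarrow> y \<in> T' \<longrightarrow> i = j \<and> T = T') \<and>
   (\<forall>i\<in>I. s i \<in> P i) \<and> (\<forall>i\<in>I. \<forall>j\<in>I. i \<noteq> j \<longrightarrow> s i \<inter> s j = {})"

definition good_nat :: "nat \<Rightarrow> bool" where
 "good_nat m \<longleftrightarrow> (\<exists>(V::nat set) (P::nat \<Rightarrow> nat set set) s. goodI V {..<m} P s)"

lemma goodI_D:
  assumes "goodI V I P s"
  shows goodI_finV: "finite V" and goodI_finI: "finite I" and goodI_card: "card V = 3 * card I"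
    and goodI_blk: "\<And>i T. i \<in> I \<Longrightarrow> T \<in> P i \<Longrightarrow> T \<subseteq> V \<and> card T = 3"
    and goodI_dsj: "\<And>i T T'. i \<in> I \<Longrightarrow> T \<in> P i \<Longrightarrow> T' \<in> P i \<Longrightarrow> T \<inter> T' \<noteq> {} \<Longrightarrow> T = T'"
    and goodI_cov: "\<And>i. i \<in> I \<Longrightarrow> \<Union>(P i) = V"
    and goodI_pr: "\<And>i j T T' x y. i \<in> I \<Longrightarrow> j \<in> I \<Longrightarrow> T \<in> P i \<Longrightarrow> T' \<in> P j \<Longrightarrow> x \<noteq> y \<Longrightarrow> x \<in> T \<Longrightarrow> y \<in> T \<Longrightarrow> x \<in> T' \<Longrightarrow> y \<in> T' \<Longrightarrow> i = j \<and> T = T'"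
    and goodI_sP: "\<And>i. i \<in> I \<Longrightarrow> s i \<in> P i"
    and goodI_sd: "\<And>i j. i \<in> I \<Longrightarrow> j \<in> I \<Longrightarrow> i \<noteq> j \<Longrightarrow> s i \<inter> s j = {}"
proof -
  note A = assms[unfolded goodI_def]
  show "finite V" using A by blast
  show "finite I" using A by blast
  show "card V = 3 * card I" using A by blast
  show "\<And>i T. i \<in> I \<Longrightarrow> T \<in> P i \<Longrightarrow> T \<subseteq> V \<and> card T = 3"
    using A[THEN conjunct2, THEN conjunct2, THEN conjunct2, THEN conjunct1] by blast
  show "\<And>i T T'. i \<in> I \<Longrightarrow> T \<in> P i \<Longrightarrow> T' \<in> P i \<Longrightarrow> T \<inter> T' \<noteq> {} \<Longrightarrow> T = T'"
    using A[THEN conjunct2, THEN conjunct2, THEN conjunct2, THEN conjunct2, THEN conjunct1] by blast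
  show "\<And>i. i \<in> I \<Longrightarrow> \<Union>(P i) = V"
    using A[THEN conjunct2, THEN conjunct2, THEN conjunct2, THEN conjunct2, THEN conjunct2, THEN conjunct1] by blast
  show "\<And>i j T T' x y. i \<in> I \<Longrightarrow> j \<in> I \<Longrightarrow> T \<in> P i \<Longrightarrow> T' \<in> P j \<Longrightarrow> x \<noteq> y \<Longrightarrow> x \<in> T \<Longrightarrow> y \<in> T \<Longrightarrow> x \<in> T' \<Longrightarrow> y \<in> T' \<Longrightarrow> i = j \<and> T = T'"
    using A[THEN conjunct2, THEN conjunct2, THEN conjunct2, THEN conjunct2, THEN conjunct2, THEN conjunct2, THEN conjunct1] by blast
  show "\<And>i. i \<in> I \<Longrightarrow> s i \<in> P i"
    using A[THEN conjunct2, THEN conjunct2, THEN conjunct2, THEN conjunct2, THEN conjunct2, THEN conjunct2, THEN conjunct2, THEN conjunct1] by blast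
  show "\<And>i j. i \<in> I \<Longrightarrow> j \<in> I \<Longrightarrow> i \<noteq> j \<Longrightarrow> s i \<inter> s j = {}"
    using A[THEN conjunct2, THEN conjunct2, THEN conjunct2, THEN conjunct2, THEN conjunct2, THEN conjunct2, THEN conjunct2, THEN conjunct2] by blast
qed


lemma goodI_image:
  assumes g: "goodI V I P s" and f: "inj f"
  shows "goodI (f ` V) I (\<lambda>i. (`) f ` P i) (\<lambda>i. f ` s i)"
proof -
  have injV: "inj_on f A" for A using f by (meson inj_on_subset subset_UNIV)
  have c1: "\<forall>i\<in>I. \<forall>T\<in>(`) f ` P i. T \<subseteq> f ` V \<and> card T = 3"
  proof (intro ballI)
    fix i T assume i: "i \<in> I" and T: "T \<in> (`) f ` P i"
    obtain A where A: "A \<in> P i" "T = f ` A" using T by auto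
    show "T \<subseteq> f ` V \<and> card T = 3" using goodI_blk[OF g i A(1)] A(2) card_image[OF injV] by auto
  qed
  have c2: "\<forall>i\<in>I. \<forall>T\<in>(`) f ` P i. \<forall>T'\<in>(`) f ` P i. T \<inter> T' \<noteq> {} \<longrightarrow> T = T'"
  proof (intro ballI impI)
    fix i T T' assume i: "i \<in> I" and T: "T \<in> (`) f ` P i" and T': "T' \<in> (`) f ` P i" and ne: "T \<inter> T' \<noteq> {}"
    obtain A where A: "A \<in> P i" "T = f ` A" using T by auto
    obtain A' where A': "A' \<in> P i" "T' = f ` A'" using T' by auto
    have "A \<inter> A' \<noteq> {}" using ne A A' by (auto simp: image_Int[OF f, symmetric])
    hence "A = A'" using goodI_dsj[OF g i A(1) A'(1)] by blast
    thus "T = T'" using A A' by simp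
  qed
  have c3: "\<forall>i\<in>I. \<Union>((`) f ` P i) = f ` V"
  proof
    fix i assume i: "i \<in> I"
    have "\<Union>((`) f ` P i) = f ` \<Union>(P i)" by (simp add: image_Union)
    thus "\<Union>((`) f ` P i) = f ` V" using goodI_cov[OF g i] by simp
  qed
  have c4: "\<forall>i\<in>I. \<forall>j\<in>I. \<forall>T\<in>(`) f ` P i. \<forall>T'\<in>(`) f ` P j. \<forall>x y. x \<noteq> y \<longrightarrow> x \<in> T \<longrightarrow> y \<in> T \<longrightarrow> x \<in> T' \<longrightarrow> y \<in> T' \<longrightarrow> i = j \<and> T = T'"
  proof (intro ballI allI impI)
    fix i j T T' x y assume i: "i \<in> I" and j: "j \<in> I" and T: "T \<in> (`) f ` P i" and T': "T' \<in> (`) f ` P j"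
      and xy: "x \<noteq> y" "x \<in> T" "y \<in> T" "x \<in> T'" "y \<in> T'"
    obtain A where A: "A \<in> P i" "T = f ` A" using T by auto
    obtain A' where A': "A' \<in> P j" "T' = f ` A'" using T' by auto
    obtain x0 where x0: "x0 \<in> A" "x = f x0" using xy A by blast
    obtain y0 where y0: "y0 \<in> A" "y = f y0" using xy A by blast
    have x0': "x0 \<in> A'" using xy(4) A' x0 f by (auto dest: injD)
    have y0': "y0 \<in> A'" using xy(5) A' y0 f by (auto dest: injD)
    have "x0 \<noteq> y0" using xy x0 y0 by blast
    hence "i = j \<and> A = A'" using goodI_pr[OF g i j A(1) A'(1) _ x0(1) y0(1) x0' y0'] by blast
    thus "i = j \<and> T = T'" using A A' by simp
  qed
  have c5: "\<forall>i\<in>I. \<forall>j\<in>I. i \<noteq> j \<longrightarrow> f ` s i \<inter> f ` s j = {}"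
    using goodI_sd[OF g] by (simp add: image_Int[OF f, symmetric])
  have c6: "\<forall>i\<in>I. f ` s i \<in> (`) f ` P i" using goodI_sP[OF g] by blast
  have c0: "card (f ` V) = 3 * card I" using goodI_card[OF g] card_image[OF injV] by simp
  have fV: "finite (f ` V)" using goodI_finV[OF g] by simp
  show ?thesis unfolding goodI_def 
    by (intro conjI) (fact fV goodI_finI[OF g] c0 c1 c2 c3 c4 c5 c6)+
qed

lemma goodI_reindex:
  assumes g: "goodI V I P s" and e: "bij_betw e J I"
  shows "goodI V J (\<lambda>k. P (e k)) (\<lambda>k. s (e k))"
proof -
  have fin: "finite J" using goodI_finI[OF g] e bij_betw_finite by blast
  have cJ: "card J = card I" using e bij_betw_same_card by blast
  have eI: "k \<in> J \<Longrightarrow> e k \<in> I" for k using e bij_betwE by blast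
  have inj: "k \<in> J \<Longrightarrow> k' \<in> J \<Longrightarrow> e k = e k' \<Longrightarrow> k = k'" for k k'
    using e unfolding bij_betw_def inj_on_def by blast
  have c1: "\<forall>i\<in>J. \<forall>T\<in>P (e i). T \<subseteq> V \<and> card T = 3" using goodI_blk[OF g] eI by blast
  have c2: "\<forall>i\<in>J. \<forall>T\<in>P (e i). \<forall>T'\<in>P (e i). T \<inter> T' \<noteq> {} \<longrightarrow> T = T'"
    using goodI_dsj[OF g] eI by blast
  have c3: "\<forall>i\<in>J. \<Union>(P (e i)) = V" using goodI_cov[OF g] eI by blast
  have c4: "\<forall>i\<in>J. \<forall>j\<in>J. \<forall>T\<in>P (e i). \<forall>T'\<in>P (e j). \<forall>x y. x \<noteq> y \<longrightarrow> x \<in> T \<longrightarrow> y \<in> T \<longrightarrow> x \<in> T' \<longrightarrow> y \<in> T' \<longrightarrow> i = j \<and> T = T'"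
  proof (intro ballI allI impI)
    fix i j T T' x y assume i: "i \<in> J" and j: "j \<in> J" and T: "T \<in> P (e i)" and T': "T' \<in> P (e j)"
      and xy: "x \<noteq> y" "x \<in> T" "y \<in> T" "x \<in> T'" "y \<in> T'"
    have "e i = e j \<and> T = T'" using goodI_pr[OF g eI[OF i] eI[OF j] T T' xy] by blast
    thus "i = j \<and> T = T'" using inj i j by blast
  qed
  have c5: "\<forall>i\<in>J. \<forall>j\<in>J. i \<noteq> j \<longrightarrow> s (e i) \<inter> s (e j) = {}"
  proof (intro ballI impI)
    fix i j assume i: "i \<in> J" and j: "j \<in> J" and ij: "i \<noteq> j"
    have "e i \<noteq> e j" using inj i j ij by blast
    thus "s (e i) \<inter> s (e j) = {}" using goodI_sd[OF g eI[OF i] eI[OF j]] by blast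
  qed
  have c6: "\<forall>i\<in>J. s (e i) \<in> P (e i)" using goodI_sP[OF g] eI by blast
  have c0: "card V = 3 * card J" using goodI_card[OF g] cJ by simp
  show ?thesis unfolding goodI_def
    by (intro conjI) (fact goodI_finV[OF g] fin c0 c1 c2 c3 c4 c5 c6)+
qed

lemma good_nat_intro:
  assumes g: "goodI (V::'p::countable set) (I::'i set) P s"
  shows "good_nat (card I)"
proof -
  have "finite I" using g unfolding goodI_def by simp
  then obtain e where e: "bij_betw e {0..<card I} I" using ex_bij_betw_nat_finite by blast
  have e': "bij_betw e {..<card I} I" using e by (simp add: atLeast0LessThan)
  have "goodI (to_nat ` V) {..<card I} (\<lambda>k. (`) to_nat ` P (e k)) (\<lambda>k. to_nat ` s (e k))"
    using goodI_image[OF goodI_reindex[OF g e'] inj_to_nat] by simp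
  thus ?thesis unfolding good_nat_def by blast
qed

lemma D_witness: "\<exists>B. is_packing r 4 {0..<r} B \<and> card B = D r 4"
proof -
  let ?S = "{card B | B. is_packing r 4 {0..<r::nat} B}"
  have "?S \<subseteq> card ` Pow (Pow {0..<r})" by (auto simp: is_packing_def)
  hence fin: "finite ?S" by (rule finite_subset) auto
  have "is_packing r 4 {0..<r} {}" by (simp add: is_packing_def)
  hence ne: "?S \<noteq> {}" by blast
  have "D r 4 \<in> ?S" unfolding D_def using Max_in[OF fin ne] by simp
  thus ?thesis by auto
qed

lemma card3_finite: "card (T::'a set) = 3 \<Longrightarrow> finite T"
  using card.infinite by fastforce

lemma assemble:
  assumes g: "goodI (V::nat set) {..<m} P s" and r1: "1 \<le> r" and rm: "r \<le> m"
  shows "\<exists>(X::nat set) B. is_packing (3*m + r) 4 X B \<and> finite B \<and> card B = r * m + D r 4 \<and> largest_PPC_size B r"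
proof -
  have finV: "finite V" using goodI_finV[OF g] .
  have cV: "card V = 3*m" using goodI_card[OF g] by simp
  define N where "N = Suc (Max (insert 0 V))"
  have VN: "v \<in> V \<Longrightarrow> v < N" for v
  proof -
    assume v: "v \<in> V"
    have "v \<le> Max (insert 0 V)" using finV v by simp
    thus "v < N" unfolding N_def by simp
  qed
  obtain Bo where Bo: "is_packing r 4 {0..<r} Bo" "card Bo = D r 4" using D_witness by blast
  have Bo_blk: "c \<in> Bo \<Longrightarrow> c \<subseteq> {0..<r} \<and> card c = 4" for c using Bo(1) unfolding is_packing_def by blast
  have Bo_fin: "finite Bo"
  proof -
    have "Bo \<subseteq> Pow {0..<r}" using Bo_blk by blast
    thus ?thesis by (rule finite_subset) simp
  qed
  have Bo_pr: "x \<in> {0..<r} \<Longrightarrow> y \<in> {0..<r} \<Longrightarrow> x \<noteq> y \<Longrightarrow> card {c\<in>Bo. x \<in> c \<and> y \<in> c} \<le> 1" for x y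
    using Bo(1) unfolding is_packing_def by blast
  have blkk: "k < m \<Longrightarrow> T \<in> P k \<Longrightarrow> T \<subseteq> V \<and> card T = 3" for k T using goodI_blk[OF g] by simp
  have cPk: "finite (P k) \<and> card (P k) = m" if k: "k < m" for k
  proof -
    have sub: "P k \<subseteq> Pow V" using blkk[OF k] by blast
    have fin: "finite (P k)" using finite_subset[OF sub] finV by simp
    have pw: "pairwise disjnt (P k)"
      unfolding pairwise_def disjnt_def using goodI_dsj[OF g, of k] k by blast
    have "card (\<Union>(P k)) = sum card (P k)"
      by (rule card_Union_disjoint[OF pw]) (use blkk[OF k] card3_finite in blast)
    also have "\<dots> = sum (\<lambda>_. 3) (P k)" by (rule sum.cong) (simp_all add: blkk[OF k])
    also have "\<dots> = 3 * card (P k)" by simp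
    finally have "card V = 3 * card (P k)" using goodI_cov[OF g, of k] k by simp
    thus ?thesis using cV fin by simp
  qed
  define sh where "sh = (\<lambda>b. (+) N ` b)"
  define B1 where "B1 = (\<lambda>(k,T). insert (N+k) T) ` (SIGMA k:{..<r}. P k)"
  define B2 where "B2 = sh ` Bo"
  define X where "X = V \<union> {N..<N+r}"
  define B where "B = B1 \<union> B2"
  have B1E: "b \<in> B1 \<Longrightarrow> (\<And>k T. k < r \<Longrightarrow> T \<in> P k \<Longrightarrow> b = insert (N+k) T \<Longrightarrow> thesis) \<Longrightarrow> thesis" for b thesis
    unfolding B1_def by blast
  have B2E: "b \<in> B2 \<Longrightarrow> (\<And>c. c \<in> Bo \<Longrightarrow> b = sh c \<Longrightarrow> thesis) \<Longrightarrow> thesis" for b thesis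
    unfolding B2_def by blast
  have km: "k < r \<Longrightarrow> k < m" for k using rm by simp
  have finSig: "finite (SIGMA k:{..<r}. P k)" using cPk km by auto
  have finB: "finite B" unfolding B_def B1_def B2_def using finSig Bo_fin by simp
  have B2ge: "b \<in> B2 \<Longrightarrow> z \<in> b \<Longrightarrow> N \<le> z \<and> z < N + r" for b z
  proof -
    assume b: "b \<in> B2" and z: "z \<in> b"
    obtain c where c: "c \<in> Bo" "b = sh c" using b by (rule B2E)
    obtain x where x: "x \<in> c" "z = N + x" using z c(2) unfolding sh_def by blast
    have "x < r" using Bo_blk[OF c(1)] x(1) by auto
    thus ?thesis using x by simp
  qed
  have B1ge: "b = insert (N+k) T \<Longrightarrow> k < r \<Longrightarrow> T \<in> P k \<Longrightarrow> z \<in> b \<Longrightarrow> N \<le> z \<Longrightarrow> z = N + k" for b k T z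
    using blkk[OF km] VN by force
  have blocks: "b \<subseteq> X \<and> card b = 4" if b: "b \<in> B" for b
  proof (cases "b \<in> B1")
    case True
    then obtain k T where kT: "k < r" "T \<in> P k" "b = insert (N+k) T" by (rule B1E)
    have T: "T \<subseteq> V" "card T = 3" using blkk[OF km kT(2)] kT(1) by auto
    have "N + k \<notin> T" using T(1) VN by force
    hence "card b = 4" using kT(3) T(2) card3_finite[OF T(2)] by simp
    moreover have "b \<subseteq> X" using kT T unfolding X_def by auto
    ultimately show ?thesis by simp
  next
    case False
    hence "b \<in> B2" using b B_def by simp
    then obtain c where c: "c \<in> Bo" "b = sh c" by (rule B2E)
    have "card b = card c" unfolding c(2) sh_def by (simp add: card_image)
    moreover have "b \<subseteq> X" using Bo_blk[OF c(1)] c(2) unfolding X_def sh_def by auto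
    ultimately show ?thesis using Bo_blk[OF c(1)] by simp
  qed
  have uniq: "b1 = b2" if b1: "b1 \<in> B" and b2: "b2 \<in> B" and xy: "x \<noteq> y" "x \<in> b1" "y \<in> b1" "x \<in> b2" "y \<in> b2" for b1 b2 x y
  proof -
    have one1: "b1 = b2" if b1: "b1 \<in> B1" and b2: "b2 \<in> B1" and xy: "x \<noteq> y" "x \<in> b1" "y \<in> b1" "x \<in> b2" "y \<in> b2" for b1 b2 x y
    proof -
      obtain k1 T1 where kT1: "k1 < r" "T1 \<in> P k1" "b1 = insert (N+k1) T1" using b1 by (rule B1E)
      obtain k2 T2 where kT2: "k2 < r" "T2 \<in> P k2" "b2 = insert (N+k2) T2" using b2 by (rule B1E)
      have T1V: "T1 \<subseteq> V" using blkk[OF km kT1(2)] kT1(1) by auto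
      have T2V: "T2 \<subseteq> V" using blkk[OF km kT2(2)] kT2(1) by auto
      show ?thesis
      proof (cases "x \<in> T1 \<and> y \<in> T1")
        case True
        have "x \<in> T2" using xy(4) kT2(3) True T1V VN by force
        moreover have "y \<in> T2" using xy(5) kT2(3) True T1V VN by force
        ultimately have "k1 = k2 \<and> T1 = T2"
          using goodI_pr[OF g _ _ kT1(2) kT2(2) xy(1)] True km kT1(1) kT2(1) by simp
        thus ?thesis using kT1 kT2 by simp
      next
        case False
        then obtain z w where zw: "z = N + k1" "z \<in> b2" "w \<in> T1" "w \<in> b2" "w \<in> b1"
          using xy kT1(3) by blast
        have "z \<notin> T2" using T2V VN zw(1) by force
        hence "z = N + k2" using zw(2) kT2(3) by simp
        hence k: "k1 = k2" using zw(1) by simp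
        have "w \<noteq> N + k2" using zw(3) T1V VN by force
        hence "w \<in> T2" using zw(4) kT2(3) by simp
        hence "T1 \<inter> T2 \<noteq> {}" using zw(3) by blast
        hence "T1 = T2" using goodI_dsj[OF g _ kT1(2)] kT2(2) k km kT1(1) by simp
        thus ?thesis using k kT1 kT2 by simp
      qed
    qed
    have mixed: "False" if b1: "b1 \<in> B1" and b2: "b2 \<in> B2" and xy: "x \<noteq> y" "x \<in> b1" "y \<in> b1" "x \<in> b2" "y \<in> b2" for b1 b2 x y
    proof -
      obtain k1 T1 where kT1: "k1 < r" "T1 \<in> P k1" "b1 = insert (N+k1) T1" using b1 by (rule B1E)
      have "x = N + k1" using B1ge[OF kT1(3) kT1(1) kT1(2) xy(2)] B2ge[OF b2 xy(4)] by simp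
      moreover have "y = N + k1" using B1ge[OF kT1(3) kT1(1) kT1(2) xy(3)] B2ge[OF b2 xy(5)] by simp
      ultimately show False using xy(1) by simp
    qed
    have two2: "b1 = b2" if b1: "b1 \<in> B2" and b2: "b2 \<in> B2" and xy: "x \<noteq> y" "x \<in> b1" "y \<in> b1" "x \<in> b2" "y \<in> b2" for b1 b2 x y
    proof -
      obtain c1 where c1: "c1 \<in> Bo" "b1 = sh c1" using b1 by (rule B2E)
      obtain c2 where c2: "c2 \<in> Bo" "b2 = sh c2" using b2 by (rule B2E)
      obtain x' where x': "x' \<in> c1" "x = N + x'" using xy(2) c1(2) unfolding sh_def by blast
      obtain y' where y': "y' \<in> c1" "y = N + y'" using xy(3) c1(2) unfolding sh_def by blast
      have x2: "x' \<in> c2" using xy(4) c2(2) x'(2) unfolding sh_def by auto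
      have y2: "y' \<in> c2" using xy(5) c2(2) y'(2) unfolding sh_def by auto
      have "x' \<noteq> y'" using xy(1) x' y' by simp
      hence le: "card {c\<in>Bo. x' \<in> c \<and> y' \<in> c} \<le> 1"
        using Bo_pr Bo_blk[OF c1(1)] x'(1) y'(1) by blast
      have "finite {c\<in>Bo. x' \<in> c \<and> y' \<in> c}" using Bo_fin by simp
      hence "c1 = c2" using le card_le_Suc0_iff_eq c1(1) c2(1) x' y' x2 y2 by (metis (mono_tags, lifting) One_nat_def mem_Collect_eq)
      thus ?thesis using c1 c2 by simp
    qed
    show ?thesis
    proof (cases "b1 \<in> B1")
      case T1: True
      show ?thesis
      proof (cases "b2 \<in> B1")
        case True thus ?thesis using one1 T1 xy by blast
      next
        case False hence "b2 \<in> B2" using b2 B_def by simp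
        thus ?thesis using mixed T1 xy by blast
      qed
    next
      case F1: False hence b1': "b1 \<in> B2" using b1 B_def by simp
      show ?thesis
      proof (cases "b2 \<in> B1")
        case True thus ?thesis using mixed[of b2 b1 x y] b1' xy by blast
      next
        case False hence "b2 \<in> B2" using b2 B_def by simp
        thus ?thesis using two2 b1' xy by blast
      qed
    qed
  qed
  have pack: "is_packing (3*m + r) 4 X B"
  proof -
    have "finite X" unfolding X_def using finV by simp
    moreover have "card X = 3*m + r"
    proof -
      have "V \<inter> {N..<N+r} = {}" using VN by force
      thus ?thesis unfolding X_def using finV cV by (simp add: card_Un_disjoint)
    qed
    moreover have "\<forall>x\<in>X. \<forall>y\<in>X. x \<noteq> y \<longrightarrow> card {b\<in>B. x \<in> b \<and> y \<in> b} \<le> 1"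
    proof (intro ballI impI)
      fix x y assume "x \<in> X" "y \<in> X" "x \<noteq> y"
      have "finite {b\<in>B. x \<in> b \<and> y \<in> b}" using finB by simp
      thus "card {b\<in>B. x \<in> b \<and> y \<in> b} \<le> 1"
        using uniq \<open>x \<noteq> y\<close> by (subst One_nat_def, subst card_le_Suc0_iff_eq) auto
    qed
    ultimately show ?thesis unfolding is_packing_def using blocks by blast
  qed
  have disjB: "B1 \<inter> B2 = {}"
  proof (rule ccontr)
    assume "B1 \<inter> B2 \<noteq> {}"
    then obtain b where b: "b \<in> B1" "b \<in> B2" by blast
    obtain k T where kT: "k < r" "T \<in> P k" "b = insert (N+k) T" using b(1) by (rule B1E)
    have "card T = 3" "T \<subseteq> V" using blkk[OF km kT(2)] kT(1) by auto
    then obtain z where "z \<in> T" by (metis card.empty ex_in_conv zero_neq_numeral)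
    hence "z < N" "z \<in> b" using \<open>T \<subseteq> V\<close> VN kT(3) by auto
    thus False using B2ge[OF b(2)] by force
  qed
  have cB1: "card B1 = r * m"
  proof -
    have inj: "inj_on (\<lambda>(k,T). insert (N+k) T) (SIGMA k:{..<r}. P k)"
    proof (rule inj_onI, clarsimp)
      fix k T k' T' assume k: "k < r" "T \<in> P k" "k' < r" "T' \<in> P k'" and eq: "insert (N+k) T = insert (N+k') T'"
      have T: "T \<subseteq> V" using blkk[OF km] k by blast
      have T': "T' \<subseteq> V" using blkk[OF km] k by blast
      have nk: "N + k \<notin> T'" "N + k' \<notin> T" using T T' VN by force+
      have "N + k \<in> insert (N+k') T'" using eq by blast
      hence kk: "k = k'" using nk by simp
      have "N + k \<notin> T" using T VN by force
      hence "T = insert (N+k) T - {N+k}" by simp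
      also have "\<dots> = insert (N+k') T' - {N+k'}" using eq kk by simp
      also have "\<dots> = T'" using nk(1) kk by simp
      finally show "k = k' \<and> T = T'" using kk by simp
    qed
    have "card B1 = card (SIGMA k:{..<r}. P k)" unfolding B1_def by (rule card_image[OF inj])
    also have "\<dots> = (\<Sum>k<r. card (P k))" using cPk km by (simp add: card_SigmaI)
    also have "\<dots> = (\<Sum>k<r. m)" using cPk km by simp
    finally show ?thesis by simp
  qed
  have cB2: "card B2 = D r 4"
  proof -
    have "inj_on sh Bo" unfolding sh_def by (rule inj_onI) (simp add: inj_image_eq_iff)
    thus ?thesis unfolding B2_def using Bo(2) by (simp add: card_image)
  qed
  have cB: "card B = r * m + D r 4"
    unfolding B_def using disjB cB1 cB2 finB B_def by (simp add: card_Un_disjoint)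
  have ex: "\<exists>Q. is_PPC B Q \<and> finite Q \<and> card Q = r"
  proof -
    define Q where "Q = (\<lambda>k. insert (N+k) (s k)) ` {..<r}"
    have sPk: "k < r \<Longrightarrow> s k \<in> P k" for k using goodI_sP[OF g] km by simp
    have sV: "k < r \<Longrightarrow> s k \<subseteq> V" for k using blkk[OF km sPk] by blast
    have QB: "Q \<subseteq> B" unfolding Q_def B_def B1_def using sPk by force
    have dis: "insert (N+k) (s k) \<inter> insert (N+k') (s k') = {}" if "k < r" "k' < r" "k \<noteq> k'" for k k'
    proof -
      have "s k \<inter> s k' = {}" using goodI_sd[OF g] that km by simp
      moreover have "N + k \<notin> s k'" "N + k' \<notin> s k" using sV that VN by force+
      ultimately show ?thesis using that by auto
    qed
    have inj: "inj_on (\<lambda>k. insert (N+k) (s k)) {..<r}"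
    proof (rule inj_onI)
      fix k k' assume "k \<in> {..<r}" "k' \<in> {..<r}" "insert (N+k) (s k) = insert (N+k') (s k')"
      thus "k = k'" using dis by (metis Int_absorb insert_not_empty lessThan_iff)
    qed
    have "is_PPC B Q" unfolding is_PPC_def using QB dis unfolding Q_def by blast
    moreover have "card Q = r" unfolding Q_def using inj by (simp add: card_image)
    ultimately show ?thesis unfolding Q_def by blast
  qed
  have nex: "\<not> (\<exists>Q. is_PPC B Q \<and> finite Q \<and> card Q = r + 1)"
  proof
    assume "\<exists>Q. is_PPC B Q \<and> finite Q \<and> card Q = r + 1"
    then obtain Q where Q: "is_PPC B Q" "finite Q" "card Q = r + 1" by blast
    have hasz: "\<exists>z. z \<in> b \<and> N \<le> z \<and> z < N + r" if b: "b \<in> B" for b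
    proof (cases "b \<in> B1")
      case True
      then obtain k T where kT: "k < r" "T \<in> P k" "b = insert (N+k) T" by (rule B1E)
      thus ?thesis by auto
    next
      case False
      hence b2: "b \<in> B2" using b B_def by simp
      then obtain c where c: "c \<in> Bo" "b = sh c" by (rule B2E)
      have "card c = 4" using Bo_blk[OF c(1)] by simp
      then obtain z where "z \<in> c" by (metis card.empty ex_in_conv zero_neq_numeral)
      hence "N + z \<in> b" using c(2) unfolding sh_def by blast
      thus ?thesis using B2ge[OF b2] by blast
    qed
    define f where "f b = (SOME z. z \<in> b \<and> N \<le> z \<and> z < N + r)" for b
    have fP: "b \<in> B \<Longrightarrow> f b \<in> b \<and> N \<le> f b \<and> f b < N + r" for b
      unfolding f_def using hasz by (rule someI_ex) 
    have QB: "Q \<subseteq> B" using Q(1) unfolding is_PPC_def by blast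
    have inj: "inj_on f Q"
    proof (rule inj_onI)
      fix b b' assume bb: "b \<in> Q" "b' \<in> Q" "f b = f b'"
      have "f b \<in> b \<inter> b'" using fP QB bb by (metis IntI subsetD)
      thus "b = b'" using Q(1) bb unfolding is_PPC_def by blast
    qed
    have "f ` Q \<subseteq> {N..<N+r}" using fP QB by force
    hence "card Q \<le> card {N..<N+r}" using card_inj_on_le[OF inj] by blast
    thus False using Q(3) by simp
  qed
  have lp: "largest_PPC_size B r" unfolding largest_PPC_size_def using ex nex by blast
  show ?thesis using pack finB cB lp by blast
qed

locale hgrp =
  fixes Hs :: "'h set" and add :: "'h \<Rightarrow> 'h \<Rightarrow> 'h" and neg :: "'h \<Rightarrow> 'h" and zero :: 'h
    and kap :: "nat \<Rightarrow> 'h \<Rightarrow> 'h"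
  assumes fin: "finite Hs" and zero_in: "zero \<in> Hs"
    and add_in: "x \<in> Hs \<Longrightarrow> y \<in> Hs \<Longrightarrow> add x y \<in> Hs"
    and neg_in: "x \<in> Hs \<Longrightarrow> neg x \<in> Hs"
    and assoc: "x \<in> Hs \<Longrightarrow> y \<in> Hs \<Longrightarrow> z \<in> Hs \<Longrightarrow> add (add x y) z = add x (add y z)"
    and comm: "x \<in> Hs \<Longrightarrow> y \<in> Hs \<Longrightarrow> add x y = add y x"
    and zero_l: "x \<in> Hs \<Longrightarrow> add zero x = x"
    and neg_l: "x \<in> Hs \<Longrightarrow> add (neg x) x = zero"
    and kap_in: "q < 3 \<Longrightarrow> x \<in> Hs \<Longrightarrow> kap q x \<in> Hs"
    and kap_inj: "q < 3 \<Longrightarrow> x \<in> Hs \<Longrightarrow> y \<in> Hs \<Longrightarrow> kap q x = kap q y \<Longrightarrow> x = y"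
    and dif_inj: "q1 < 3 \<Longrightarrow> q2 < 3 \<Longrightarrow> q1 \<noteq> q2 \<Longrightarrow> x \<in> Hs \<Longrightarrow> y \<in> Hs \<Longrightarrow>
        add (kap q2 x) (neg (kap q1 x)) = add (kap q2 y) (neg (kap q1 y)) \<Longrightarrow> x = y"
begin

lemma zero_r: "x \<in> Hs \<Longrightarrow> add x zero = x"
  using comm zero_l zero_in by metis

lemma neg_r: "x \<in> Hs \<Longrightarrow> add x (neg x) = zero"
  using comm neg_l neg_in by metis

lemma cancel_r:
  assumes "a \<in> Hs" "b \<in> Hs" "c \<in> Hs" "add a c = add b c"
  shows "a = b"
proof -
  have "a = add (add a c) (neg c)" using assms(1-3) by (simp add: assoc neg_in neg_r zero_r)
  also have "\<dots> = add (add b c) (neg c)" using assms(4) by simp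
  also have "\<dots> = b" using assms(1-3) by (simp add: assoc neg_in neg_r zero_r)
  finally show ?thesis .
qed

lemma cancel_l:
  assumes "a \<in> Hs" "b \<in> Hs" "c \<in> Hs" "add c a = add c b"
  shows "a = b"
  using cancel_r[OF assms(1-3)] assms comm by metis

lemma solve: "y \<in> Hs \<Longrightarrow> a \<in> Hs \<Longrightarrow> \<exists>x\<in>Hs. add x a = y"
  by (rule bexI[of _ "add y (neg a)"]) (simp_all add: assoc neg_in neg_l zero_r add_in)

lemma kap_surj:
  assumes q: "q < 3" and y: "y \<in> Hs"
  shows "\<exists>x\<in>Hs. kap q x = y"
proof -
  have "kap q ` Hs = Hs"
    by (rule endo_inj_surj[OF fin]) (use kap_in kap_inj q in \<open>auto intro: inj_onI\<close>)
  thus ?thesis using y by (metis imageE)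
qed

lemma diffL:
  assumes H: "a \<in> Hs" "b \<in> Hs" "c \<in> Hs" "d \<in> Hs" "j \<in> Hs" "j' \<in> Hs"
    and e1: "add a j = add c j'" and e2: "add b j = add d j'"
  shows "add b (neg a) = add d (neg c)"
proof -
  have k1: "add (add b (neg a)) (add a j) = add b j"
  proof -
    have "add (add b (neg a)) (add a j) = add b (add (neg a) (add a j))"
      using H by (simp add: assoc neg_in add_in)
    also have "\<dots> = add b (add (add (neg a) a) j)" using H by (simp add: assoc neg_in)
    also have "\<dots> = add b j" using H by (simp add: neg_l zero_l)
    finally show ?thesis .
  qed
  have k2: "add (add d (neg c)) (add c j') = add d j'"
  proof -
    have "add (add d (neg c)) (add c j') = add d (add (neg c) (add c j'))"
      using H by (simp add: assoc neg_in add_in)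
    also have "\<dots> = add d (add (add (neg c) c) j')" using H by (simp add: assoc neg_in)
    also have "\<dots> = add d j'" using H by (simp add: neg_l zero_l)
    finally show ?thesis .
  qed
  show ?thesis
    by (rule cancel_r[of _ _ "add a j"]) (use H k1 k2 e1 e2 in \<open>simp_all add: add_in neg_in\<close>)
qed

end

definition ordT :: "'p::linorder set \<Rightarrow> nat \<Rightarrow> 'p" where
  "ordT T q = sorted_list_of_set T ! q"

lemma ordT_props:
  assumes "card (T::'p::linorder set) = 3"
  shows "ordT T ` {..<3} = T" and "inj_on (ordT T) {..<3}"
proof -
  have fin: "finite T" using assms card3_finite by blast
  let ?xs = "sorted_list_of_set T"
  have len: "length ?xs = 3" using assms fin by simp
  have dist: "distinct ?xs" by simp
  have st: "set ?xs = T" using fin by simp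
  show "ordT T ` {..<3} = T" unfolding ordT_def using st len set_conv_nth[of ?xs] by auto
  show "inj_on (ordT T) {..<3}" unfolding ordT_def using dist len by (intro inj_on_nth) auto
qed

context hgrp begin

definition LT :: "'p::linorder set \<Rightarrow> 'h \<Rightarrow> 'h \<Rightarrow> ('p \<times> 'h) set" where
  "LT T x j = (\<lambda>q. (ordT T q, add (kap q x) j)) ` {..<3}"

lemma LT_mem: "(p,v) \<in> LT T x j \<longleftrightarrow> (\<exists>q<3. p = ordT T q \<and> v = add (kap q x) j)"
  by (auto simp: LT_def)

definition liftP :: "('i \<Rightarrow> 'p::linorder set set) \<Rightarrow> 'i \<times> 'h \<Rightarrow> ('p \<times> 'h) set set" where
  "liftP P ij = (\<lambda>Tx. LT (fst Tx) (snd Tx) (snd ij)) ` (P (fst ij) \<times> Hs)"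

definition lifts :: "('i \<Rightarrow> 'p::linorder set) \<Rightarrow> 'i \<times> 'h \<Rightarrow> ('p \<times> 'h) set" where
  "lifts s ij = LT (s (fst ij)) zero (snd ij)"

lemma liftP_mem: "B \<in> liftP P ij \<longleftrightarrow> (\<exists>T x. T \<in> P (fst ij) \<and> x \<in> Hs \<and> B = LT T x (snd ij))"
  unfolding liftP_def by force

lemma lift_good:
  assumes g: "goodI (V::'p::linorder set) I P s"
  shows "goodI (V \<times> Hs) (I \<times> Hs) (liftP P) (lifts s)"
proof -
  have card3: "i \<in> I \<Longrightarrow> T \<in> P i \<Longrightarrow> card T = 3" for i T using goodI_blk[OF g] by blast
  have TV: "i \<in> I \<Longrightarrow> T \<in> P i \<Longrightarrow> T \<subseteq> V" for i T using goodI_blk[OF g] by blast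
  have ordin: "i \<in> I \<Longrightarrow> T \<in> P i \<Longrightarrow> q < 3 \<Longrightarrow> ordT T q \<in> T" for i T q
    using ordT_props(1)[OF card3] by blast
  have ordinj: "i \<in> I \<Longrightarrow> T \<in> P i \<Longrightarrow> q < 3 \<Longrightarrow> q' < 3 \<Longrightarrow> ordT T q = ordT T q' \<Longrightarrow> q = q'" for i T q q'
    using ordT_props(2)[OF card3] unfolding inj_on_def by blast
  have ordsurj: "i \<in> I \<Longrightarrow> T \<in> P i \<Longrightarrow> p \<in> T \<Longrightarrow> \<exists>q<3. ordT T q = p" for i T p
    using ordT_props(1)[OF card3] by force
  have finV: "finite V" using goodI_finV[OF g] .
  have c0: "card (V \<times> Hs) = 3 * card (I \<times> Hs)" using goodI_card[OF g] by (simp add: card_cartesian_product)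
  have c1: "\<forall>ij\<in>I \<times> Hs. \<forall>B\<in>liftP P ij. B \<subseteq> V \<times> Hs \<and> card B = 3"
  proof (intro ballI)
    fix ij B assume ij: "ij \<in> I \<times> Hs" and B: "B \<in> liftP P ij"
    obtain T x where Tx: "T \<in> P (fst ij)" "x \<in> Hs" "B = LT T x (snd ij)" using B liftP_mem by blast
    have i: "fst ij \<in> I" and j: "snd ij \<in> Hs" using ij by auto
    have sub: "B \<subseteq> V \<times> Hs"
      using Tx ordin[OF i Tx(1)] TV[OF i Tx(1)] kap_in add_in j unfolding LT_def by blast
    have inj: "inj_on (\<lambda>q. (ordT T q, add (kap q x) (snd ij))) {..<3}"
      using ordinj[OF i Tx(1)] unfolding inj_on_def by blast
    have "card B = 3" unfolding Tx(3) LT_def using card_image[OF inj] by simp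
    thus "B \<subseteq> V \<times> Hs \<and> card B = 3" using sub by simp
  qed
  have c2: "\<forall>ij\<in>I \<times> Hs. \<forall>B\<in>liftP P ij. \<forall>B'\<in>liftP P ij. B \<inter> B' \<noteq> {} \<longrightarrow> B = B'"
  proof (intro ballI impI)
    fix ij B B' assume ij: "ij \<in> I \<times> Hs" and B: "B \<in> liftP P ij" and B': "B' \<in> liftP P ij" and ne: "B \<inter> B' \<noteq> {}"
    have i: "fst ij \<in> I" and j: "snd ij \<in> Hs" using ij by auto
    obtain T x where Tx: "T \<in> P (fst ij)" "x \<in> Hs" "B = LT T x (snd ij)" using B liftP_mem by blast
    obtain T' x' where Tx': "T' \<in> P (fst ij)" "x' \<in> Hs" "B' = LT T' x' (snd ij)" using B' liftP_mem by blast
    obtain p v where pv: "(p,v) \<in> B" "(p,v) \<in> B'" using ne by auto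
    obtain q where q: "q < 3" "p = ordT T q" "v = add (kap q x) (snd ij)" using pv(1) Tx(3) LT_mem by blast
    obtain q' where q': "q' < 3" "p = ordT T' q'" "v = add (kap q' x') (snd ij)" using pv(2) Tx'(3) LT_mem by blast
    have pT: "p \<in> T" using ordin[OF i Tx(1) q(1)] q(2) by simp
    have pT': "p \<in> T'" using ordin[OF i Tx'(1) q'(1)] q'(2) by simp
    have "T \<inter> T' \<noteq> {}" using pT pT' by blast
    hence TT: "T = T'" using goodI_dsj[OF g i Tx(1) Tx'(1)] by blast
    have qq: "q = q'" by (rule ordinj[OF i Tx(1) q(1) q'(1)]) (use q q' TT in simp)
    have "add (kap q x) (snd ij) = add (kap q x') (snd ij)" using q(3) q'(3) qq by simp
    hence "kap q x = kap q x'" by (rule cancel_r[OF kap_in[OF q(1) Tx(2)] kap_in[OF q(1) Tx'(2)] j])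
    hence "x = x'" by (rule kap_inj[OF q(1) Tx(2) Tx'(2)])
    thus "B = B'" using Tx Tx' TT by simp
  qed
  have c3: "\<forall>ij\<in>I \<times> Hs. \<Union>(liftP P ij) = V \<times> Hs"
  proof
    fix ij assume ij: "ij \<in> I \<times> Hs"
    have i: "fst ij \<in> I" and j: "snd ij \<in> Hs" using ij by auto
    show "\<Union>(liftP P ij) = V \<times> Hs"
    proof
      show "\<Union>(liftP P ij) \<subseteq> V \<times> Hs" using c1 ij by blast
      show "V \<times> Hs \<subseteq> \<Union>(liftP P ij)"
      proof
        fix pv assume pv: "pv \<in> V \<times> Hs"
        obtain p v where pv': "pv = (p,v)" "p \<in> V" "v \<in> Hs" using pv by auto
        have "p \<in> \<Union>(P (fst ij))" using goodI_cov[OF g i] pv'(2) by simp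
        then obtain T where T: "T \<in> P (fst ij)" "p \<in> T" by blast
        obtain q where q: "q < 3" "ordT T q = p" using ordsurj[OF i T] by blast
        obtain z where z: "z \<in> Hs" "add z (snd ij) = v" using solve[OF pv'(3) j] by blast
        obtain x where x: "x \<in> Hs" "kap q x = z" using kap_surj[OF q(1) z(1)] by blast
        have "(p,v) \<in> LT T x (snd ij)" unfolding LT_mem using q z x by metis
        moreover have "LT T x (snd ij) \<in> liftP P ij" using liftP_mem T x by blast
        ultimately show "pv \<in> \<Union>(liftP P ij)" using pv' by blast
      qed
    qed
  qed
  have c4: "\<forall>ij\<in>I \<times> Hs. \<forall>ij'\<in>I \<times> Hs. \<forall>B\<in>liftP P ij. \<forall>B'\<in>liftP P ij'. \<forall>a b. a \<noteq> b \<longrightarrow> a \<in> B \<longrightarrow> b \<in> B \<longrightarrow> a \<in> B' \<longrightarrow> b \<in> B' \<longrightarrow> ij = ij' \<and> B = B'"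
  proof (intro ballI allI impI)
    fix ij ij' B B' a b
    assume ij: "ij \<in> I \<times> Hs" and ij': "ij' \<in> I \<times> Hs" and B: "B \<in> liftP P ij" and B': "B' \<in> liftP P ij'"
      and ab: "a \<noteq> b" "a \<in> B" "b \<in> B" "a \<in> B'" "b \<in> B'"
    have i: "fst ij \<in> I" and j: "snd ij \<in> Hs" using ij by auto
    have i': "fst ij' \<in> I" and j': "snd ij' \<in> Hs" using ij' by auto
    obtain T x where Tx: "T \<in> P (fst ij)" "x \<in> Hs" "B = LT T x (snd ij)" using B liftP_mem by blast
    obtain T' x' where Tx': "T' \<in> P (fst ij')" "x' \<in> Hs" "B' = LT T' x' (snd ij')" using B' liftP_mem by blast
    obtain p1 v1 where a: "a = (p1,v1)" by (cases a)
    obtain p2 v2 where b: "b = (p2,v2)" by (cases b)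
    obtain q1 where q1: "q1 < 3" "p1 = ordT T q1" "v1 = add (kap q1 x) (snd ij)" using ab(2) a Tx(3) LT_mem by blast
    obtain q2 where q2: "q2 < 3" "p2 = ordT T q2" "v2 = add (kap q2 x) (snd ij)" using ab(3) b Tx(3) LT_mem by blast
    obtain r1 where r1: "r1 < 3" "p1 = ordT T' r1" "v1 = add (kap r1 x') (snd ij')" using ab(4) a Tx'(3) LT_mem by blast
    obtain r2 where r2: "r2 < 3" "p2 = ordT T' r2" "v2 = add (kap r2 x') (snd ij')" using ab(5) b Tx'(3) LT_mem by blast
    have q12: "q1 \<noteq> q2" using ab(1) a b q1 q2 by auto
    have p12: "p1 \<noteq> p2"
    proof
      assume "p1 = p2"
      hence "ordT T q1 = ordT T q2" using q1(2) q2(2) by simp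
      hence "q1 = q2" by (rule ordinj[OF i Tx(1) q1(1) q2(1)])
      thus False using q12 by simp
    qed
    have m1: "p1 \<in> T" using ordin[OF i Tx(1) q1(1)] q1(2) by simp
    have m2: "p2 \<in> T" using ordin[OF i Tx(1) q2(1)] q2(2) by simp
    have m3: "p1 \<in> T'" using ordin[OF i' Tx'(1) r1(1)] r1(2) by simp
    have m4: "p2 \<in> T'" using ordin[OF i' Tx'(1) r2(1)] r2(2) by simp
    have "fst ij = fst ij' \<and> T = T'" by (rule goodI_pr[OF g i i' Tx(1) Tx'(1) p12 m1 m2 m3 m4])
    hence ii: "fst ij = fst ij'" and TT: "T = T'" by auto
    have rq1: "r1 = q1" by (rule ordinj[OF i Tx(1) r1(1) q1(1)]) (use q1 r1 TT in simp)
    have rq2: "r2 = q2" by (rule ordinj[OF i Tx(1) r2(1) q2(1)]) (use q2 r2 TT in simp)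
    have e1: "add (kap q1 x) (snd ij) = add (kap q1 x') (snd ij')" using q1 r1 rq1 by simp
    have e2: "add (kap q2 x) (snd ij) = add (kap q2 x') (snd ij')" using q2 r2 rq2 by simp
    have "add (kap q2 x) (neg (kap q1 x)) = add (kap q2 x') (neg (kap q1 x'))"
      by (rule diffL[OF kap_in[OF q1(1) Tx(2)] kap_in[OF q2(1) Tx(2)] kap_in[OF q1(1) Tx'(2)] kap_in[OF q2(1) Tx'(2)] j j' e1 e2])
    hence xx: "x = x'" by (rule dif_inj[OF q1(1) q2(1) q12 Tx(2) Tx'(2)])
    have "add (kap q1 x) (snd ij) = add (kap q1 x) (snd ij')" using e1 xx by simp
    hence jj: "snd ij = snd ij'" using cancel_l[OF j j' kap_in[OF q1(1) Tx(2)]] comm[OF kap_in[OF q1(1) Tx(2)]] j j' by metis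
    have "ij = ij'" using ii jj by (simp add: prod_eq_iff)
    thus "ij = ij' \<and> B = B'" using Tx Tx' TT xx jj by simp
  qed
  have c5: "\<forall>ij\<in>I \<times> Hs. lifts s ij \<in> liftP P ij"
    using goodI_sP[OF g] zero_in unfolding lifts_def liftP_mem by auto
  have c6: "\<forall>ij\<in>I \<times> Hs. \<forall>ij'\<in>I \<times> Hs. ij \<noteq> ij' \<longrightarrow> lifts s ij \<inter> lifts s ij' = {}"
  proof (intro ballI impI)
    fix ij ij' assume ij: "ij \<in> I \<times> Hs" and ij': "ij' \<in> I \<times> Hs" and ne: "ij \<noteq> ij'"
    have i: "fst ij \<in> I" and j: "snd ij \<in> Hs" using ij by auto
    have i': "fst ij' \<in> I" and j': "snd ij' \<in> Hs" using ij' by auto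
    show "lifts s ij \<inter> lifts s ij' = {}"
    proof (rule ccontr)
      assume "lifts s ij \<inter> lifts s ij' \<noteq> {}"
      then obtain p v where pv: "(p,v) \<in> lifts s ij" "(p,v) \<in> lifts s ij'" by auto
      obtain q where q: "q < 3" "p = ordT (s (fst ij)) q" "v = add (kap q zero) (snd ij)"
        using pv(1) unfolding lifts_def LT_mem by blast
      obtain q' where q': "q' < 3" "p = ordT (s (fst ij')) q'" "v = add (kap q' zero) (snd ij')"
        using pv(2) unfolding lifts_def LT_mem by blast
      have sP: "s (fst ij) \<in> P (fst ij)" "s (fst ij') \<in> P (fst ij')" using goodI_sP[OF g] i i' by auto
      have "p \<in> s (fst ij)" using ordin[OF i sP(1) q(1)] q(2) by simp
      moreover have "p \<in> s (fst ij')" using ordin[OF i' sP(2) q'(1)] q'(2) by simp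
      ultimately have "s (fst ij) \<inter> s (fst ij') \<noteq> {}" by blast
      hence ii: "fst ij = fst ij'" using goodI_sd[OF g i i'] by blast
      have qq: "q = q'" by (rule ordinj[OF i sP(1) q(1) q'(1)]) (use q q' ii in simp)
      have "add (kap q zero) (snd ij) = add (kap q zero) (snd ij')" using q(3) q'(3) qq by simp
      hence "snd ij = snd ij'" using cancel_l[OF j j' kap_in[OF q(1) zero_in]] comm[OF kap_in[OF q(1) zero_in]] j j' by metis
      thus False using ii ne by (simp add: prod_eq_iff)
    qed
  qed
  have fin2: "finite (V \<times> Hs)" "finite (I \<times> Hs)" using finV goodI_finI[OF g] fin by auto
  show ?thesis unfolding goodI_def
    by (intro conjI) (fact fin2 c0 c1 c2 c3 c4 c5 c6)+
qed

end

definition Yt :: "(nat \<times> nat) set" where "Yt = {..<3} \<times> {..<3}"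

definition bl :: "nat \<Rightarrow> nat \<times> nat \<Rightarrow> nat" where
  "bl c y = (if c = 0 then (snd y + 2 * fst y) mod 3 else if c = 1 then (snd y + fst y) mod 3 else fst y)"

definition ps :: "nat \<Rightarrow> nat \<times> nat \<Rightarrow> nat" where
  "ps c y = (if c = 2 then (fst y + snd y) mod 3 else fst y)"

lemma less3: "(n::nat) < 3 \<longleftrightarrow> n = 0 \<or> n = 1 \<or> n = 2" by auto

lemma Yt_mem: "y \<in> Yt \<longleftrightarrow> (fst y = 0 \<or> fst y = 1 \<or> fst y = 2) \<and> (snd y = 0 \<or> snd y = 1 \<or> snd y = 2)"
  unfolding Yt_def by (cases y) auto

lemma F_rng: "y \<in> Yt \<Longrightarrow> c < 3 \<Longrightarrow> bl c y < 3 \<and> ps c y < 3"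
  unfolding bl_def ps_def Yt_def by auto

lemma F_line: "y \<in> Yt \<Longrightarrow> y' \<in> Yt \<Longrightarrow> c < 3 \<Longrightarrow> bl c y = bl c y' \<Longrightarrow> ps c y = ps c y' \<Longrightarrow> y = y'"
  unfolding Yt_mem less3 bl_def ps_def by (cases y; cases y') auto

lemma F_surj: "c < 3 \<Longrightarrow> b < 3 \<Longrightarrow> p < 3 \<Longrightarrow> \<exists>y\<in>Yt. bl c y = b \<and> ps c y = p"
  apply (rule bexI[of _ "(if c=2 then b else p, if c=0 then (b+p) mod 3 else if c=1 then (b+2*p) mod 3 else (p+2*b) mod 3)"])
  unfolding less3 Yt_def bl_def ps_def
  by (elim disjE; simp)+

lemma F_ag: "y1 \<in> Yt \<Longrightarrow> y2 \<in> Yt \<Longrightarrow> y1 \<noteq> y2 \<Longrightarrow> c < 3 \<Longrightarrow> c' < 3 \<Longrightarrow> bl c y1 = bl c y2 \<Longrightarrow> bl c' y1 = bl c' y2 \<Longrightarrow> c = c'"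
  unfolding Yt_mem less3 bl_def by (cases y1; cases y2) auto

lemma F_ag2: "y1 \<in> Yt \<Longrightarrow> y2 \<in> Yt \<Longrightarrow> y1 \<noteq> y2 \<Longrightarrow> c < 3 \<Longrightarrow> bl c y1 = bl c y2 \<Longrightarrow> snd y1 \<noteq> snd y2"
  unfolding Yt_mem less3 bl_def by (cases y1; cases y2) auto

locale hrep = hgrp Hs add neg zero kap
  for Hs :: "'h set" and add and neg and zero and kap +
  fixes e :: "nat \<Rightarrow> 'h"
  assumes e_in: "c < 3 \<Longrightarrow> e c \<in> Hs"
    and rep: "w < 3 \<Longrightarrow> u1 < 3 \<Longrightarrow> u2 < 3 \<Longrightarrow> u1 \<noteq> u2 \<Longrightarrow> c < 3 \<Longrightarrow> c' < 3 \<Longrightarrow> c \<noteq> c' \<Longrightarrow>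
      add (kap (ps c (u2,w)) (e c)) (neg (kap (ps c (u1,w)) (e c))) \<noteq>
      add (kap (ps c' (u2,w)) (e c')) (neg (kap (ps c' (u1,w)) (e c')))"
begin

definition LTr :: "nat \<Rightarrow> nat \<Rightarrow> 'h \<Rightarrow> 'h \<Rightarrow> ((nat \<times> nat) \<times> 'h) set" where
  "LTr c b x j = (\<lambda>y. (y, add (kap (ps c y) x) j)) ` {y \<in> Yt. bl c y = b}"

definition RTr :: "nat \<Rightarrow> nat \<Rightarrow> 'h \<Rightarrow> ((nat \<times> nat) \<times> 'h) set" where
  "RTr c w j = (\<lambda>u. ((u,w), add (kap (ps c (u,w)) (e c)) j)) ` {..<3}"

definition RP :: "nat \<times> 'h \<Rightarrow> ((nat \<times> nat) \<times> 'h) set set" where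
  "RP ij = {LTr (fst ij) b x (snd ij) | b x. b < 3 \<and> x \<in> Hs \<and> x \<noteq> e (fst ij)} \<union> {RTr (fst ij) w (snd ij) | w. w < 3}"

definition rs :: "nat \<times> 'h \<Rightarrow> ((nat \<times> nat) \<times> 'h) set" where
  "rs ij = RTr (fst ij) (fst ij) (snd ij)"

lemma LTr_mem: "(y,v) \<in> LTr c b x j \<longleftrightarrow> y \<in> Yt \<and> bl c y = b \<and> v = add (kap (ps c y) x) j"
  unfolding LTr_def by auto

lemma RTr_mem: "(y,v) \<in> RTr c w j \<longleftrightarrow> fst y < 3 \<and> snd y = w \<and> v = add (kap (ps c y) (e c)) j"
  unfolding RTr_def by (cases y) auto

lemma RP_cases:
  assumes "B \<in> RP ij"
  obtains (L) b x where "b < 3" "x \<in> Hs" "x \<noteq> e (fst ij)" "B = LTr (fst ij) b x (snd ij)"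
    | (R) w where "w < 3" "B = RTr (fst ij) w (snd ij)"
  using assms unfolding RP_def by blast

lemma card_line: "c < 3 \<Longrightarrow> b < 3 \<Longrightarrow> card {y \<in> Yt. bl c y = b} = 3"
proof -
  assume c: "c < 3" and b: "b < 3"
  have "bij_betw (ps c) {y \<in> Yt. bl c y = b} {..<3}"
    unfolding bij_betw_def
  proof
    show "inj_on (ps c) {y \<in> Yt. bl c y = b}" using F_line c by (auto intro: inj_onI)
    show "ps c ` {y \<in> Yt. bl c y = b} = {..<3}"
    proof
      show "ps c ` {y \<in> Yt. bl c y = b} \<subseteq> {..<3}" using F_rng c by auto
      show "{..<3} \<subseteq> ps c ` {y \<in> Yt. bl c y = b}"
      proof
        fix p assume "p \<in> {..<3::nat}"
        then obtain y where "y \<in> Yt" "bl c y = b" "ps c y = p" using F_surj c b by force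
        thus "p \<in> ps c ` {y \<in> Yt. bl c y = b}" by blast
      qed
    qed
  qed
  thus ?thesis using bij_betw_same_card by fastforce
qed

lemma repair_good: "goodI (Yt \<times> Hs) ({..<3::nat} \<times> Hs) RP rs"
proof -
  have YtF: "finite Yt" unfolding Yt_def by simp
  have cYt: "card Yt = 9" unfolding Yt_def by (simp add: card_cartesian_product)
  have c0: "card (Yt \<times> Hs) = 3 * card ({..<3::nat} \<times> Hs)" using cYt by (simp add: card_cartesian_product)
  have c1: "\<forall>ij\<in>{..<3::nat} \<times> Hs. \<forall>B\<in>RP ij. B \<subseteq> Yt \<times> Hs \<and> card B = 3"
  proof (intro ballI)
    fix ij B assume ij: "ij \<in> {..<3::nat} \<times> Hs" and B: "B \<in> RP ij"
    have c: "fst ij < 3" and j: "snd ij \<in> Hs" using ij by auto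
    show "B \<subseteq> Yt \<times> Hs \<and> card B = 3" using B
    proof (cases rule: RP_cases)
      case (L b x)
      have sub: "B \<subseteq> Yt \<times> Hs" using L F_rng[OF _ c] kap_in add_in j unfolding LTr_def by auto
      have "card B = card {y \<in> Yt. bl (fst ij) y = b}" unfolding L(4) LTr_def
        by (rule card_image) (auto intro: inj_onI)
      thus ?thesis using sub card_line[OF c L(1)] by simp
    next
      case (R w)
      have sub: "B \<subseteq> Yt \<times> Hs" using R kap_in add_in j e_in[OF c] unfolding RTr_def Yt_def
        by (auto simp: ps_def)
      have "card B = card {..<3::nat}" unfolding R(2) RTr_def
        by (rule card_image) (auto intro: inj_onI)
      thus ?thesis using sub by simp
    qed
  qed
  have c2: "\<forall>ij\<in>{..<3::nat} \<times> Hs. \<forall>B\<in>RP ij. \<forall>B'\<in>RP ij. B \<inter> B' \<noteq> {} \<longrightarrow> B = B'"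
  proof (intro ballI impI)
    fix ij B B' assume ij: "ij \<in> {..<3::nat} \<times> Hs" and B: "B \<in> RP ij" and B': "B' \<in> RP ij" and ne: "B \<inter> B' \<noteq> {}"
    have c: "fst ij < 3" and j: "snd ij \<in> Hs" using ij by auto
    obtain y v where yv: "(y,v) \<in> B" "(y,v) \<in> B'" using ne by auto
    show "B = B'" using B
    proof (cases rule: RP_cases)
      case L1: (L b x)
      have m1: "y \<in> Yt" "bl (fst ij) y = b" "v = add (kap (ps (fst ij) y) x) (snd ij)" using yv(1) L1(4) LTr_mem by auto
      have p: "ps (fst ij) y < 3" using F_rng[OF m1(1) c] by simp
      show ?thesis using B'
      proof (cases rule: RP_cases)
        case L2: (L b' x')
        have m2: "bl (fst ij) y = b'" "v = add (kap (ps (fst ij) y) x') (snd ij)" using yv(2) L2(4) LTr_mem by auto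
        have "kap (ps (fst ij) y) x = kap (ps (fst ij) y) x'"
          by (rule cancel_r[OF kap_in[OF p L1(2)] kap_in[OF p L2(2)] j]) (use m1 m2 in simp)
        hence "x = x'" by (rule kap_inj[OF p L1(2) L2(2)])
        thus ?thesis using L1 L2 m1 m2 by simp
      next
        case R2: (R w')
        have m2: "v = add (kap (ps (fst ij) y) (e (fst ij))) (snd ij)" using yv(2) R2(2) RTr_mem by auto
        have "kap (ps (fst ij) y) x = kap (ps (fst ij) y) (e (fst ij))"
          by (rule cancel_r[OF kap_in[OF p L1(2)] kap_in[OF p e_in[OF c]] j]) (use m1 m2 in simp)
        hence "x = e (fst ij)" by (rule kap_inj[OF p L1(2) e_in[OF c]])
        thus ?thesis using L1(3) by simp
      qed
    next
      case R1: (R w)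
      have m1: "fst y < 3" "snd y = w" "v = add (kap (ps (fst ij) y) (e (fst ij))) (snd ij)" using yv(1) R1(2) RTr_mem by auto
      show ?thesis using B'
      proof (cases rule: RP_cases)
        case L2: (L b' x')
        have m2: "y \<in> Yt" "v = add (kap (ps (fst ij) y) x') (snd ij)" using yv(2) L2(4) LTr_mem by auto
        have p: "ps (fst ij) y < 3" using F_rng[OF m2(1) c] by simp
        have "kap (ps (fst ij) y) x' = kap (ps (fst ij) y) (e (fst ij))"
          by (rule cancel_r[OF kap_in[OF p L2(2)] kap_in[OF p e_in[OF c]] j]) (use m1 m2 in simp)
        hence "x' = e (fst ij)" by (rule kap_inj[OF p L2(2) e_in[OF c]])
        thus ?thesis using L2(3) by simp
      next
        case R2: (R w')
        have "snd y = w'" using yv(2) R2(2) RTr_mem by auto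
        thus ?thesis using R1 R2 m1 by simp
      qed
    qed
  qed
  have c3: "\<forall>ij\<in>{..<3::nat} \<times> Hs. \<Union>(RP ij) = Yt \<times> Hs"
  proof
    fix ij assume ij: "ij \<in> {..<3::nat} \<times> Hs"
    have c: "fst ij < 3" and j: "snd ij \<in> Hs" using ij by auto
    show "\<Union>(RP ij) = Yt \<times> Hs"
    proof
      show "\<Union>(RP ij) \<subseteq> Yt \<times> Hs" using c1 ij by blast
      show "Yt \<times> Hs \<subseteq> \<Union>(RP ij)"
      proof
        fix yv assume yv: "yv \<in> Yt \<times> Hs"
        obtain y v where yv': "yv = (y,v)" "y \<in> Yt" "v \<in> Hs" using yv by auto
        have p: "ps (fst ij) y < 3" and bb: "bl (fst ij) y < 3" using F_rng[OF yv'(2) c] by auto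
        obtain z where z: "z \<in> Hs" "add z (snd ij) = v" using solve[OF yv'(3) j] by blast
        obtain x where x: "x \<in> Hs" "kap (ps (fst ij) y) x = z" using kap_surj[OF p z(1)] by blast
        show "yv \<in> \<Union>(RP ij)"
        proof (cases "x = e (fst ij)")
          case True
          have "snd y < 3" using yv'(2) unfolding Yt_def by auto
          hence "RTr (fst ij) (snd y) (snd ij) \<in> RP ij" unfolding RP_def by blast
          moreover have "(y,v) \<in> RTr (fst ij) (snd y) (snd ij)"
            unfolding RTr_mem using yv'(2) True x z unfolding Yt_def by auto
          ultimately show ?thesis using yv' by blast
        next
          case False
          have "LTr (fst ij) (bl (fst ij) y) x (snd ij) \<in> RP ij" unfolding RP_def using bb x False by blast
          moreover have "(y,v) \<in> LTr (fst ij) (bl (fst ij) y) x (snd ij)"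
            unfolding LTr_mem using yv'(2) x z by simp
          ultimately show ?thesis using yv' by blast
        qed
      qed
    qed
  qed
  have c4: "\<forall>ij\<in>{..<3::nat} \<times> Hs. \<forall>ij'\<in>{..<3::nat} \<times> Hs. \<forall>B\<in>RP ij. \<forall>B'\<in>RP ij'. \<forall>a b. a \<noteq> b \<longrightarrow> a \<in> B \<longrightarrow> b \<in> B \<longrightarrow> a \<in> B' \<longrightarrow> b \<in> B' \<longrightarrow> ij = ij' \<and> B = B'"
  proof (intro ballI allI impI)
    fix ij ij' B B' a b
    assume ij: "ij \<in> {..<3::nat} \<times> Hs" and ij': "ij' \<in> {..<3::nat} \<times> Hs" and B: "B \<in> RP ij" and B': "B' \<in> RP ij'"
      and ab: "a \<noteq> b" "a \<in> B" "b \<in> B" "a \<in> B'" "b \<in> B'"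
    have c: "fst ij < 3" and j: "snd ij \<in> Hs" using ij by auto
    have c': "fst ij' < 3" and j': "snd ij' \<in> Hs" using ij' by auto
    obtain y1 v1 where a: "a = (y1,v1)" by (cases a)
    obtain y2 v2 where b: "b = (y2,v2)" by (cases b)
    have Y1: "y1 \<in> Yt" and Y2: "y2 \<in> Yt" using c1 ij B ab(2,3) a b by blast+
    have yy: "y1 \<noteq> y2"
    proof
      assume y: "y1 = y2"
      have "v1 = v2" using B
      proof (cases rule: RP_cases)
        case (L b x) thus ?thesis using ab(2,3) a b y LTr_mem by auto
      next
        case (R w) thus ?thesis using ab(2,3) a b y RTr_mem by auto
      qed
      thus False using ab(1) a b y by simp
    qed
    show "ij = ij' \<and> B = B'" using B
    proof (cases rule: RP_cases)
      case L1: (L bb x)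
      have m1: "bl (fst ij) y1 = bb" "v1 = add (kap (ps (fst ij) y1) x) (snd ij)"
               "bl (fst ij) y2 = bb" "v2 = add (kap (ps (fst ij) y2) x) (snd ij)"
        using ab(2,3) a b L1(4) LTr_mem by auto
      show ?thesis using B'
      proof (cases rule: RP_cases)
        case L2: (L bb' x')
        have m2: "bl (fst ij') y1 = bb'" "v1 = add (kap (ps (fst ij') y1) x') (snd ij')"
                 "bl (fst ij') y2 = bb'" "v2 = add (kap (ps (fst ij') y2) x') (snd ij')"
          using ab(4,5) a b L2(4) LTr_mem by auto
        have cc: "fst ij = fst ij'" using F_ag[OF Y1 Y2 yy c c'] m1 m2 by simp
        have p1: "ps (fst ij) y1 < 3" and p2: "ps (fst ij) y2 < 3" using F_rng[OF Y1 c] F_rng[OF Y2 c] by auto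
        have p12: "ps (fst ij) y1 \<noteq> ps (fst ij) y2" using F_line[OF Y1 Y2 c] m1 yy by auto
        have e1: "add (kap (ps (fst ij) y1) x) (snd ij) = add (kap (ps (fst ij) y1) x') (snd ij')" using m1 m2 cc by simp
        have e2: "add (kap (ps (fst ij) y2) x) (snd ij) = add (kap (ps (fst ij) y2) x') (snd ij')" using m1 m2 cc by simp
        have "add (kap (ps (fst ij) y2) x) (neg (kap (ps (fst ij) y1) x)) = add (kap (ps (fst ij) y2) x') (neg (kap (ps (fst ij) y1) x'))"
          by (rule diffL[OF kap_in[OF p1 L1(2)] kap_in[OF p2 L1(2)] kap_in[OF p1 L2(2)] kap_in[OF p2 L2(2)] j j' e1 e2])
        hence xx: "x = x'" by (rule dif_inj[OF p1 p2 p12 L1(2) L2(2)])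
        have "add (kap (ps (fst ij) y1) x) (snd ij) = add (kap (ps (fst ij) y1) x) (snd ij')" using e1 xx by simp
        hence jj: "snd ij = snd ij'" by (rule cancel_l[OF j j' kap_in[OF p1 L1(2)]])
        have "ij = ij'" using cc jj by (simp add: prod_eq_iff)
        moreover have "bb = bb'" using m1 m2 cc by simp
        ultimately show ?thesis using L1 L2 xx jj cc by simp
      next
        case R2: (R w')
        have "snd y1 = w'" "snd y2 = w'" using ab(4,5) a b R2(2) RTr_mem by auto
        moreover have "snd y1 \<noteq> snd y2" using F_ag2[OF Y1 Y2 yy c] m1 by simp
        ultimately show ?thesis by simp
      qed
    next
      case R1: (R w)
      have m1: "snd y1 = w" "v1 = add (kap (ps (fst ij) y1) (e (fst ij))) (snd ij)"
               "snd y2 = w" "v2 = add (kap (ps (fst ij) y2) (e (fst ij))) (snd ij)"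
        using ab(2,3) a b R1(2) RTr_mem by auto
      show ?thesis using B'
      proof (cases rule: RP_cases)
        case L2: (L bb' x')
        have "bl (fst ij') y1 = bb'" "bl (fst ij') y2 = bb'" using ab(4,5) a b L2(4) LTr_mem by auto
        hence "snd y1 \<noteq> snd y2" using F_ag2[OF Y1 Y2 yy c'] by simp
        thus ?thesis using m1 by simp
      next
        case R2: (R w')
        have m2: "v1 = add (kap (ps (fst ij') y1) (e (fst ij'))) (snd ij')"
                 "v2 = add (kap (ps (fst ij') y2) (e (fst ij'))) (snd ij')"
          using ab(4,5) a b R2(2) RTr_mem by auto
        have p1: "ps (fst ij) y1 < 3" "ps (fst ij) y2 < 3" using F_rng[OF Y1 c] F_rng[OF Y2 c] by auto
        have p2: "ps (fst ij') y1 < 3" "ps (fst ij') y2 < 3" using F_rng[OF Y1 c'] F_rng[OF Y2 c'] by auto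
        have e1: "add (kap (ps (fst ij) y1) (e (fst ij))) (snd ij) = add (kap (ps (fst ij') y1) (e (fst ij'))) (snd ij')"
          using m1 m2 by simp
        have e2: "add (kap (ps (fst ij) y2) (e (fst ij))) (snd ij) = add (kap (ps (fst ij') y2) (e (fst ij'))) (snd ij')"
          using m1 m2 by simp
        have dd: "add (kap (ps (fst ij) y2) (e (fst ij))) (neg (kap (ps (fst ij) y1) (e (fst ij)))) =
                  add (kap (ps (fst ij') y2) (e (fst ij'))) (neg (kap (ps (fst ij') y1) (e (fst ij'))))"
          by (rule diffL[OF kap_in[OF p1(1) e_in[OF c]] kap_in[OF p1(2) e_in[OF c]] kap_in[OF p2(1) e_in[OF c']] kap_in[OF p2(2) e_in[OF c']] j j' e1 e2])
        have u: "fst y1 < 3" "fst y2 < 3" "fst y1 \<noteq> fst y2" "snd y1 < 3"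
          using Y1 Y2 yy m1 unfolding Yt_def by (auto simp: prod_eq_iff)
        have y1e: "y1 = (fst y1, snd y1)" and y2e: "y2 = (fst y2, snd y1)" using m1 by (auto simp: prod_eq_iff)
        have cc: "fst ij = fst ij'"
        proof (rule ccontr)
          assume ne: "fst ij \<noteq> fst ij'"
          show False using rep[OF u(4) u(1) u(2) u(3) c c' ne] dd y1e y2e by metis
        qed
        have "add (kap (ps (fst ij) y1) (e (fst ij))) (snd ij) = add (kap (ps (fst ij) y1) (e (fst ij))) (snd ij')"
          using e1 cc by simp
        hence jj: "snd ij = snd ij'" by (rule cancel_l[OF j j' kap_in[OF p1(1) e_in[OF c]]])
        have "ij = ij'" using cc jj by (simp add: prod_eq_iff)
        moreover have "w = w'" using ab(4) a R2(2) RTr_mem m1 by auto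
        ultimately show ?thesis using R1 R2 by simp
      qed
    qed
  qed
  have c5: "\<forall>ij\<in>{..<3::nat} \<times> Hs. rs ij \<in> RP ij"
    unfolding rs_def RP_def by auto
  have c6: "\<forall>ij\<in>{..<3::nat} \<times> Hs. \<forall>ij'\<in>{..<3::nat} \<times> Hs. ij \<noteq> ij' \<longrightarrow> rs ij \<inter> rs ij' = {}"
  proof (intro ballI impI)
    fix ij ij' assume ij: "ij \<in> {..<3::nat} \<times> Hs" and ij': "ij' \<in> {..<3::nat} \<times> Hs" and ne: "ij \<noteq> ij'"
    have c: "fst ij < 3" and j: "snd ij \<in> Hs" using ij by auto
    have c': "fst ij' < 3" and j': "snd ij' \<in> Hs" using ij' by auto
    show "rs ij \<inter> rs ij' = {}"
    proof (rule ccontr)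
      assume "rs ij \<inter> rs ij' \<noteq> {}"
      then obtain y v where yv: "(y,v) \<in> rs ij" "(y,v) \<in> rs ij'" by auto
      have m1: "fst y < 3" "snd y = fst ij" "v = add (kap (ps (fst ij) y) (e (fst ij))) (snd ij)"
        using yv(1) unfolding rs_def RTr_mem by auto
      have m2: "snd y = fst ij'" "v = add (kap (ps (fst ij') y) (e (fst ij'))) (snd ij')"
        using yv(2) unfolding rs_def RTr_mem by auto
      have cc: "fst ij = fst ij'" using m1 m2 by simp
      have Y: "y \<in> Yt" using m1 c unfolding Yt_def by (cases y) auto
      have p: "ps (fst ij) y < 3" using F_rng[OF Y c] by simp
      have "add (kap (ps (fst ij) y) (e (fst ij))) (snd ij) = add (kap (ps (fst ij) y) (e (fst ij))) (snd ij')"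
        using m1 m2 cc by simp
      hence "snd ij = snd ij'" by (rule cancel_l[OF j j' kap_in[OF p e_in[OF c]]])
      thus False using cc ne by (simp add: prod_eq_iff)
    qed
  qed
  have fin2: "finite (Yt \<times> Hs)" "finite ({..<3::nat} \<times> Hs)" using YtF fin by auto
  show ?thesis unfolding goodI_def
    by (intro conjI) (fact fin2 c0 c1 c2 c3 c4 c5 c6)+
qed

end

lemma zmod_small_inj:
  fixes b s t :: int
  assumes "\<bar>s - t\<bar> < b" "s mod b = t mod b"
  shows "s = t"
proof (rule ccontr)
  assume ne: "s \<noteq> t"
  have d: "b dvd (s - t)" using assms(2) by (simp add: mod_eq_dvd_iff)
  have "\<bar>b\<bar> \<le> \<bar>s - t\<bar>" by (rule dvd_imp_le_int) (use ne d in auto)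
  thus False using assms(1) by linarith
qed

lemma zmod_coprime_inj:
  fixes b k x y :: int
  assumes b: "b > 0" and cp: "coprime k b" and x: "0 \<le> x" "x < b" and y: "0 \<le> y" "y < b"
    and eq: "(k * x) mod b = (k * y) mod b"
  shows "x = y"
proof -
  have "b dvd (k * x - k * y)" using eq by (simp add: mod_eq_dvd_iff)
  hence "b dvd k * (x - y)" by (simp add: right_diff_distrib)
  moreover have "coprime b k" using cp by (simp add: coprime_commute)
  ultimately have "b dvd (x - y)" using coprime_dvd_mult_right_iff by blast
  hence "(x - y) mod b = 0" by simp
  hence "x mod b = y mod b" by (simp add: mod_eq_dvd_iff \<open>b dvd (x - y)\<close>)
  thus ?thesis using x y by simp
qed

lemma coprime3: "\<not> 3 dvd (b::int) \<Longrightarrow> coprime 3 b"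
proof -
  assume nd: "\<not> 3 dvd b"
  have g1: "gcd 3 b dvd 3" by simp
  have g0: "gcd 3 b > 0" by simp
  have "gcd 3 b \<le> 3" using zdvd_imp_le[OF g1] by simp
  moreover have "gcd 3 b \<noteq> 2"
  proof
    assume "gcd 3 b = 2"
    hence "(2::int) dvd 3" using g1 by simp
    thus False by presburger
  qed
  moreover have "gcd 3 b \<noteq> 3" using nd by (metis gcd_dvd2)
  ultimately have "gcd 3 b = 1" using g0 by linarith
  thus ?thesis by (simp add: coprime_iff_gcd_eq_1)
qed

definition zadd :: "int \<Rightarrow> int \<Rightarrow> int \<Rightarrow> int" where "zadd b x y = (x + y) mod b"
definition zneg :: "int \<Rightarrow> int \<Rightarrow> int" where "zneg b x = (- x) mod b"
definition zkap :: "int \<Rightarrow> nat \<Rightarrow> int \<Rightarrow> int" where "zkap b q x = (int (q + 1) * x) mod b"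

lemma zdiff: "zadd b (zkap b q2 x) (zneg b (zkap b q1 x)) = ((int q2 - int q1) * x) mod b"
proof -
  have "zadd b (zkap b q2 x) (zneg b (zkap b q1 x)) = (int (q2+1) * x - int (q1+1) * x) mod b"
    unfolding zadd_def zneg_def zkap_def by (simp add: mod_add_left_eq mod_add_right_eq mod_diff_right_eq mod_diff_left_eq)
  also have "int (q2+1) * x - int (q1+1) * x = (int q2 - int q1) * x" by (simp add: algebra_simps)
  finally show ?thesis .
qed

lemma Zb_hgrp:
  assumes b: "b > 0" and c2: "\<not> 2 dvd b" and c3: "\<not> 3 dvd b"
  shows "hgrp {0..<b} (zadd b) (zneg b) 0 (zkap b)"
proof -
  have cp1: "coprime (1::int) b" by simp
  have cp2: "coprime (2::int) b" using c2 by simp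
  have cp3: "coprime (3::int) b" using c3 by (rule coprime3)
  have cpq: "coprime (int (q+1)) b" if "q < 3" for q
    using that cp1 cp2 cp3 by (auto simp: less3)
  have cpd: "coprime (int q2 - int q1) b" if "q1 < 3" "q2 < 3" "q1 \<noteq> q2" for q1 q2
    using that cp1 cp2 by (auto simp: less3)
  show ?thesis
  proof (unfold_locales)
    show "finite {0..<b}" by simp
    show "0 \<in> {0..<b}" using b by simp
    show "zadd b x y \<in> {0..<b}" for x y unfolding zadd_def using b by simp
    show "zneg b x \<in> {0..<b}" for x unfolding zneg_def using b by simp
    show "zadd b (zadd b x y) z = zadd b x (zadd b y z)" for x y z
      unfolding zadd_def by (simp add: mod_add_left_eq mod_add_right_eq add.assoc)
    show "zadd b x y = zadd b y x" for x y unfolding zadd_def by (metis add.commute)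
    show "x \<in> {0..<b} \<Longrightarrow> zadd b 0 x = x" for x unfolding zadd_def by simp
    show "zadd b (zneg b x) x = 0" for x unfolding zadd_def zneg_def by (simp add: mod_add_left_eq)
    show "zkap b q x \<in> {0..<b}" for q x unfolding zkap_def using b by simp
    show "x = y" if "q < 3" "x \<in> {0..<b}" "y \<in> {0..<b}" "zkap b q x = zkap b q y" for q x y
      by (rule zmod_coprime_inj[OF b cpq[OF that(1)]]) (use that in \<open>auto simp: zkap_def\<close>)
    show "x = y" if "q1 < 3" "q2 < 3" "q1 \<noteq> q2" "x \<in> {0..<b}" "y \<in> {0..<b}"
      "zadd b (zkap b q2 x) (zneg b (zkap b q1 x)) = zadd b (zkap b q2 y) (zneg b (zkap b q1 y))" for q1 q2 x y
      by (rule zmod_coprime_inj[OF b cpd[OF that(1-3)]]) (use that in \<open>auto simp: zdiff\<close>)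
  qed
qed

definition sv :: "nat \<Rightarrow> nat \<Rightarrow> nat \<Rightarrow> nat \<Rightarrow> int" where
  "sv c u1 u2 w = (if c = 0 then 0 else if c = 1 then int (ps 1 (u2,w)) - int (ps 1 (u1,w))
                   else - (int (ps 2 (u2,w)) - int (ps 2 (u1,w))))"

lemma F_rep: "w < 3 \<Longrightarrow> u1 < 3 \<Longrightarrow> u2 < 3 \<Longrightarrow> u1 \<noteq> u2 \<Longrightarrow> c < 3 \<Longrightarrow> c' < 3 \<Longrightarrow> c \<noteq> c' \<Longrightarrow>
   sv c u1 u2 w \<noteq> sv c' u1 u2 w \<and> \<bar>sv c u1 u2 w - sv c' u1 u2 w\<bar> \<le> 4"
  unfolding less3 sv_def ps_def by (elim disjE; simp)

definition ze :: "int \<Rightarrow> nat \<Rightarrow> int" where "ze b c = (if c = 0 then 0 else if c = 1 then 1 else b - 1)"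

lemma Zb_hrep:
  assumes b: "b \<ge> 5" and c2: "\<not> 2 dvd b" and c3: "\<not> 3 dvd b"
  shows "hrep {0..<b} (zadd b) (zneg b) 0 (zkap b) (ze b)"
proof -
  interpret hgrp "{0..<b}" "zadd b" "zneg b" 0 "zkap b" using Zb_hgrp[OF _ c2 c3] b by simp
  show ?thesis
  proof (unfold_locales)
    show "c < 3 \<Longrightarrow> ze b c \<in> {0..<b}" for c unfolding ze_def using b by auto
    fix w u1 u2 c c' :: nat
    assume H: "w < 3" "u1 < 3" "u2 < 3" "u1 \<noteq> u2" "c < 3" "c' < 3" "c \<noteq> c'"
    have val: "zadd b (zkap b (ps c (u2,w)) (ze b c)) (zneg b (zkap b (ps c (u1,w)) (ze b c))) = sv c u1 u2 w mod b"
      if "c < 3" for c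
    proof -
      have "zadd b (zkap b (ps c (u2,w)) (ze b c)) (zneg b (zkap b (ps c (u1,w)) (ze b c)))
          = ((int (ps c (u2,w)) - int (ps c (u1,w))) * ze b c) mod b" by (rule zdiff)
      also have "\<dots> = sv c u1 u2 w mod b"
      proof -
        have "c = 0 \<or> c = 1 \<or> c = 2" using that by linarith
        thus ?thesis
        proof (elim disjE)
          assume "c = 0" thus ?thesis by (simp add: ze_def sv_def)
        next
          assume "c = 1" thus ?thesis by (simp add: ze_def sv_def)
        next
          assume c2: "c = 2"
          let ?d = "int (ps 2 (u2,w)) - int (ps 2 (u1,w))"
          have "?d * (b - 1) = - ?d + ?d * b" by (simp add: algebra_simps)
          hence "(?d * (b - 1)) mod b = (- ?d) mod b" by simp
          thus ?thesis using c2 by (simp add: ze_def sv_def)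
        qed
      qed
      finally show ?thesis .
    qed
    have "sv c u1 u2 w mod b \<noteq> sv c' u1 u2 w mod b"
    proof
      assume eq: "sv c u1 u2 w mod b = sv c' u1 u2 w mod b"
      have f: "sv c u1 u2 w \<noteq> sv c' u1 u2 w \<and> \<bar>sv c u1 u2 w - sv c' u1 u2 w\<bar> \<le> 4" by (rule F_rep[OF H])
      have "\<bar>sv c u1 u2 w - sv c' u1 u2 w\<bar> < b" using f b by linarith
      hence "sv c u1 u2 w = sv c' u1 u2 w" using zmod_small_inj eq by blast
      thus False using f by simp
    qed
    thus "zadd b (zkap b (ps c (u2,w)) (ze b c)) (zneg b (zkap b (ps c (u1,w)) (ze b c))) \<noteq>
          zadd b (zkap b (ps c' (u2,w)) (ze b c')) (zneg b (zkap b (ps c' (u1,w)) (ze b c')))"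
      using val[OF H(5)] val[OF H(6)] by simp
  qed
qed

definition H9 :: "(int \<times> int) set" where "H9 = {0..<3} \<times> {0..<3}"
definition fadd :: "int \<times> int \<Rightarrow> int \<times> int \<Rightarrow> int \<times> int" where
  "fadd x y = ((fst x + fst y) mod 3, (snd x + snd y) mod 3)"
definition fneg :: "int \<times> int \<Rightarrow> int \<times> int" where
  "fneg x = ((- fst x) mod 3, (- snd x) mod 3)"
definition fkap :: "nat \<Rightarrow> int \<times> int \<Rightarrow> int \<times> int" where
  "fkap q x = ((int q * fst x - snd x) mod 3, (fst x + int q * snd x) mod 3)"
definition fe :: "nat \<Rightarrow> int \<times> int" where "fe c = (int c, 0)"

lemma q3: "(q::nat) < 3 \<Longrightarrow> q = 0 \<or> q = 1 \<or> q = 2" by auto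

lemma i3: "(a::int) \<in> {0..<3} \<Longrightarrow> a = 0 \<or> a = 1 \<or> a = 2" unfolding atLeastLessThan_iff by presburger

lemma F9_kinj: "q < 3 \<Longrightarrow> x \<in> H9 \<Longrightarrow> y \<in> H9 \<Longrightarrow> fkap q x = fkap q y \<Longrightarrow> x = y"
proof -
  assume q: "q < 3" and x: "x \<in> H9" and y: "y \<in> H9" and eq: "fkap q x = fkap q y"
  obtain a b where ab: "x = (a,b)" "a \<in> {0..<3}" "b \<in> {0..<3}" using x unfolding H9_def by auto
  obtain a' b' where ab': "y = (a',b')" "a' \<in> {0..<3}" "b' \<in> {0..<3}" using y unfolding H9_def by auto
  have e1: "(int q * a - b) mod 3 = (int q * a' - b') mod 3" and e2: "(a + int q * b) mod 3 = (a' + int q * b') mod 3"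
    using eq ab ab' unfolding fkap_def by auto
  have "a = a' \<and> b = b'"
    using q3[OF q] i3[OF ab(2)] i3[OF ab(3)] i3[OF ab'(2)] i3[OF ab'(3)] e1 e2
    by (elim disjE) simp_all
  thus ?thesis using ab ab' by simp
qed

lemma F9_diff: "fadd (fkap q2 x) (fneg (fkap q1 x)) = (((int q2 - int q1) * fst x) mod 3, ((int q2 - int q1) * snd x) mod 3)"
proof -
  have "fadd (fkap q2 x) (fneg (fkap q1 x)) = ((int q2 * fst x - snd x - (int q1 * fst x - snd x)) mod 3,
          (fst x + int q2 * snd x - (fst x + int q1 * snd x)) mod 3)"
    unfolding fadd_def fkap_def fneg_def
    by (simp add: mod_add_left_eq mod_add_right_eq mod_diff_right_eq mod_diff_left_eq)
  thus ?thesis by (simp add: algebra_simps)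
qed

lemma F9_dinj: "q1 < 3 \<Longrightarrow> q2 < 3 \<Longrightarrow> q1 \<noteq> q2 \<Longrightarrow> x \<in> H9 \<Longrightarrow> y \<in> H9 \<Longrightarrow>
   fadd (fkap q2 x) (fneg (fkap q1 x)) = fadd (fkap q2 y) (fneg (fkap q1 y)) \<Longrightarrow> x = y"
proof -
  assume q: "q1 < 3" "q2 < 3" "q1 \<noteq> q2" and x: "x \<in> H9" and y: "y \<in> H9"
    and eq: "fadd (fkap q2 x) (fneg (fkap q1 x)) = fadd (fkap q2 y) (fneg (fkap q1 y))"
  have cp: "coprime (int q2 - int q1) 3" using q by (auto simp: less3)
  have e: "((int q2 - int q1) * fst x) mod 3 = ((int q2 - int q1) * fst y) mod 3"
          "((int q2 - int q1) * snd x) mod 3 = ((int q2 - int q1) * snd y) mod 3"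
    using eq unfolding F9_diff by auto
  have "fst x = fst y" by (rule zmod_coprime_inj[OF _ cp]) (use x y e in \<open>auto simp: H9_def\<close>)
  moreover have "snd x = snd y" by (rule zmod_coprime_inj[OF _ cp]) (use x y e in \<open>auto simp: H9_def\<close>)
  ultimately show "x = y" by (simp add: prod_eq_iff)
qed

lemma F9_hgrp: "hgrp H9 fadd fneg (0,0) fkap"
proof (unfold_locales)
  show "finite H9" unfolding H9_def by simp
  show "(0,0) \<in> H9" unfolding H9_def by simp
  show "fadd x y \<in> H9" for x y unfolding H9_def fadd_def by simp
  show "fneg x \<in> H9" for x unfolding H9_def fneg_def by simp
  show "fadd (fadd x y) z = fadd x (fadd y z)" for x y z
    unfolding fadd_def by (simp add: mod_add_left_eq mod_add_right_eq add.assoc)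
  show "fadd x y = fadd y x" for x y unfolding fadd_def by (simp add: add.commute)
  show "x \<in> H9 \<Longrightarrow> fadd (0,0) x = x" for x unfolding fadd_def H9_def by (cases x) simp
  show "fadd (fneg x) x = (0,0)" for x unfolding fadd_def fneg_def by (simp add: mod_add_left_eq)
  show "fkap q x \<in> H9" for q x unfolding fkap_def H9_def by simp
  show "q < 3 \<Longrightarrow> x \<in> H9 \<Longrightarrow> y \<in> H9 \<Longrightarrow> fkap q x = fkap q y \<Longrightarrow> x = y" for q x y by (rule F9_kinj)
  show "q1 < 3 \<Longrightarrow> q2 < 3 \<Longrightarrow> q1 \<noteq> q2 \<Longrightarrow> x \<in> H9 \<Longrightarrow> y \<in> H9 \<Longrightarrow>
   fadd (fkap q2 x) (fneg (fkap q1 x)) = fadd (fkap q2 y) (fneg (fkap q1 y)) \<Longrightarrow> x = y" for q1 q2 x y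
    by (rule F9_dinj)
qed

lemma F9_rep: "w < 3 \<Longrightarrow> u1 < 3 \<Longrightarrow> u2 < 3 \<Longrightarrow> u1 \<noteq> u2 \<Longrightarrow> c < 3 \<Longrightarrow> c' < 3 \<Longrightarrow> c \<noteq> c' \<Longrightarrow>
      fadd (fkap (ps c (u2,w)) (fe c)) (fneg (fkap (ps c (u1,w)) (fe c))) \<noteq>
      fadd (fkap (ps c' (u2,w)) (fe c')) (fneg (fkap (ps c' (u1,w)) (fe c')))"
  unfolding less3 ps_def fadd_def fkap_def fneg_def fe_def by (elim disjE; simp)

lemma F9_hrep: "hrep H9 fadd fneg (0,0) fkap fe"
proof -
  interpret hgrp H9 fadd fneg "(0,0)" fkap by (rule F9_hgrp)
  show ?thesis
  proof (unfold_locales)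
    show "c < 3 \<Longrightarrow> fe c \<in> H9" for c unfolding fe_def H9_def by auto
    show "w < 3 \<Longrightarrow> u1 < 3 \<Longrightarrow> u2 < 3 \<Longrightarrow> u1 \<noteq> u2 \<Longrightarrow> c < 3 \<Longrightarrow> c' < 3 \<Longrightarrow> c \<noteq> c' \<Longrightarrow>
      fadd (fkap (ps c (u2,w)) (fe c)) (fneg (fkap (ps c (u1,w)) (fe c))) \<noteq>
      fadd (fkap (ps c' (u2,w)) (fe c')) (fneg (fkap (ps c' (u1,w)) (fe c')))" for w u1 u2 c c'
      by (rule F9_rep)
  qed
qed

lemma good1: "good_nat 1"
proof -
  have "goodI {0,1,2::nat} {0::nat} (\<lambda>_. {{0,1,2}}) (\<lambda>_. {0,1,2})"
    unfolding goodI_def by simp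
  from good_nat_intro[OF this] show ?thesis by simp
qed

lemma lift_nat:
  assumes ga: "good_nat a" and H: "hgrp (Hs::'h::countable set) add neg zero kap"
  shows "good_nat (a * card Hs)"
proof -
  obtain V P s where g: "goodI (V::nat set) {..<a} P s" using ga unfolding good_nat_def by blast
  interpret hgrp Hs add neg zero kap by (rule H)
  have "goodI (V \<times> Hs) ({..<a} \<times> Hs) (liftP P) (lifts s)" by (rule lift_good[OF g])
  hence "good_nat (card ({..<a} \<times> Hs))" by (rule good_nat_intro)
  thus ?thesis by (simp add: card_cartesian_product)
qed

lemma rep_nat:
  assumes H: "hrep (Hs::'h::countable set) add neg zero kap e"
  shows "good_nat (3 * card Hs)"
proof -
  interpret hrep Hs add neg zero kap e by (rule H)
  have "goodI (Yt \<times> Hs) ({..<3::nat} \<times> Hs) RP rs" by (rule repair_good)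
  hence "good_nat (card ({..<3::nat} \<times> Hs))" by (rule good_nat_intro)
  thus ?thesis by (simp add: card_cartesian_product)
qed

lemma cardH9: "card H9 = 9"
  unfolding H9_def by (simp add: card_cartesian_product)

lemma good_all: "odd m \<Longrightarrow> m \<noteq> 3 \<Longrightarrow> good_nat m"
proof (induction m rule: less_induct)
  case (less m)
  have m0: "m > 0" using less.prems(1) by presburger
  show ?case
  proof (cases "9 dvd m")
    case True
    then obtain k where k: "m = 9 * k" by (auto elim: dvdE)
    show ?thesis
    proof (cases "k = 3")
      case True
      have "good_nat (3 * card H9)" by (rule rep_nat[OF F9_hrep])
      thus ?thesis using k True cardH9 by simp
    next
      case False
      have "odd k" using less.prems(1) k by simp
      moreover have "k < m" using k m0 by simp
      ultimately have "good_nat k" using less.IH False by blast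
      hence "good_nat (k * card H9)" by (rule lift_nat[OF _ F9_hgrp])
      thus ?thesis using k cardH9 by (simp add: mult.commute)
    qed
  next
    case n9: False
    show ?thesis
    proof (cases "3 dvd m")
      case True
      then obtain t where t: "m = 3 * t" by (auto elim: dvdE)
      have t3: "\<not> 3 dvd t" using n9 t by auto
      have todd: "odd t" using less.prems(1) t by simp
      have "t \<noteq> 1" using less.prems(2) t by auto
      hence t5: "t \<ge> 5" using t3 todd m0 t by presburger
      have b1: "int t \<ge> 5" using t5 by simp
      have b2: "\<not> 2 dvd int t" using todd by simp
      have b3: "\<not> 3 dvd int t" using t3 by presburger
      have "good_nat (3 * card {0..<int t})" by (rule rep_nat[OF Zb_hrep[OF b1 b2 b3]])
      thus ?thesis using t by simp
    next
      case False
      have b1: "int m > 0" using m0 by simp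
      have b2: "\<not> 2 dvd int m" using less.prems(1) by simp
      have b3: "\<not> 3 dvd int m" using False by presburger
      have "good_nat (1 * card {0..<int m})" by (rule lift_nat[OF good1 Zb_hgrp[OF b1 b2 b3]])
      thus ?thesis by simp
    qed
  qed
qed

theorem theorem2p3:
  fixes n \<rho> :: nat
  assumes "n > 0" and "n mod 6 = 3"
    and "n \<notin> {9, 15, 21, 141, 153, 165, 177, 189, 231, 249, 261, 285, 351, 357}"
    and "1 \<le> \<rho>" and "3 * \<rho> \<le> n"
  shows "\<exists>(X::nat set) B. is_packing (n + \<rho>) 4 X B \<and> finite B \<and>
           card B = \<rho> * n div 3 + D \<rho> 4 \<and> largest_PPC_size B \<rho>"
proof -
  define m where "m = n div 3"
  have n3: "n = 3 * m" using assms(2) unfolding m_def by presburger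
  have odd: "odd m" using assms(2) n3 by presburger
  have m3: "m \<noteq> 3" using assms(3) n3 by auto
  have rm: "\<rho> \<le> m" using assms(5) n3 by simp
  have "good_nat m" by (rule good_all[OF odd m3])
  then obtain V P s where g: "goodI (V::nat set) {..<m} P s" unfolding good_nat_def by blast
  have ex: "\<exists>(X::nat set) B. is_packing (3*m + \<rho>) 4 X B \<and> finite B \<and> card B = \<rho> * m + D \<rho> 4 \<and> largest_PPC_size B \<rho>"
    by (rule assemble[OF g assms(4) rm])
  have e1: "3*m + \<rho> = n + \<rho>" using n3 by simp
  have e2: "\<rho> * n div 3 = \<rho> * m" using n3 by simp
  show ?thesis unfolding e2 e1[symmetric] by (rule ex)
qed

end
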